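(* Let $n\ge2$, $1\le p\le n-1$, and let $\pi,\pi'\in S_n$ be $p$-resultant permutations such that $\pi^{\text{left}}$ and $\pi'^{\text{left}}$ have the same number of left-to-right maxima and $\pi^{\text{right}}$ and $\pi'^{\text{right}}$ have the same number of right-to-left minima. Then the number of configurations in $\mathcal{S}(n-1,p)$ toppling to $\pi$ equals the number toppling to $\pi'$.
   Context: For $m\ge1$, $1\le p\le m$: sites are $0,\dots,m+1$; a configuration in $\mathcal{S}(m,p)$ places $m+1$ distinct chips labeled $1,\dots,m+1$ with sites $0,m+1$ empty, one chip at each site of $\{1,\dots,m\}\setminus\{p\}$ and two chips at site $p$. Toppling: while some site holds at least two chips, choose such a site $i$ and two chips $\alpha<\beta$ there and move $\alpha$ to $i-1$, $\beta$ to $i+1$. It is known this terminates with at most one chip per site and the final configuration is independent of the choices; reading labels left to right gives a permutation in $S_{m+1}$ to which the configuration topples. $\pi\in S_n$ is $p$-resultant if some configuration in $\mathcal{S}(n-1,p)$ topples to it; for such $\pi$, $(\pi_1,\dots,\pi_{n-p})$ is a permutation of $[n-p]$, denoted $\pi^{\text{left}}$, and $\pi^{\text{right}}=(\pi_{n-p+1},\dots,\pi_n)$ is a permutation of $\{n-p+1,\dots,n\}$. A left-to-right maximum of a sequence $a_1\cdots a_k$ is an entry $a_j$ with $a_j=\max\{a_1,\dots,a_j\}$ ($a_1$ always is one); a right-to-left minimum is an entry $a_j$ with $a_j=\min\{a_j,\dots,a_k\}$. *)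

theory Defs
  imports "HOL-Library.FuncSet"
begin

text \<open>A chip configuration for parameter m: chips are labelled 1..m+1, sites are integers
  (the relevant sites being 0..m+1). A configuration maps each chip to its site; it is
  extensional (undefined outside the chip set) so that the set of configurations is finite.\<close>

definition confS :: "nat \<Rightarrow> nat \<Rightarrow> (nat \<Rightarrow> int) set" where
  "confS m p = {c \<in> {1..m+1} \<rightarrow>\<^sub>E (UNIV :: int set).
     (\<forall>k\<in>{1..m+1}. c k \<in> {1..int m}) \<and>
     (\<forall>i\<in>{1..int m} - {int p}. card {k\<in>{1..m+1}. c k = i} = 1) \<and>
     card {k\<in>{1..m+1}. c k = int p} = 2}"

definition topple_step :: "nat \<Rightarrow> (nat \<Rightarrow> int) \<Rightarrow> (nat \<Rightarrow> int) \<Rightarrow> bool" where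
  "topple_step m c c' \<longleftrightarrow> (\<exists>\<alpha> \<beta>. 1 \<le> \<alpha> \<and> \<alpha> < \<beta> \<and> \<beta> \<le> m+1 \<and> c \<alpha> = c \<beta> \<and>
      c' = c(\<alpha> := c \<alpha> - 1, \<beta> := c \<beta> + 1))"

definition stable_conf :: "nat \<Rightarrow> (nat \<Rightarrow> int) \<Rightarrow> bool" where
  "stable_conf m c \<longleftrightarrow> inj_on c {1..m+1}"

definition reading :: "nat \<Rightarrow> (nat \<Rightarrow> int) \<Rightarrow> nat list \<Rightarrow> bool" where
  "reading m c \<pi> \<longleftrightarrow> distinct \<pi> \<and> set \<pi> = {1..m+1} \<and> sorted_wrt (\<lambda>a b. c a < c b) \<pi>"

definition topples_to :: "nat \<Rightarrow> (nat \<Rightarrow> int) \<Rightarrow> nat list \<Rightarrow> bool" where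
  "topples_to m c \<pi> \<longleftrightarrow> (\<exists>c'. (topple_step m)\<^sup>*\<^sup>* c c' \<and> stable_conf m c' \<and> reading m c' \<pi>)"

definition is_perm :: "nat \<Rightarrow> nat list \<Rightarrow> bool" where
  "is_perm n \<pi> \<longleftrightarrow> distinct \<pi> \<and> set \<pi> = {1..n}"

definition p_resultant :: "nat \<Rightarrow> nat \<Rightarrow> nat list \<Rightarrow> bool" where
  "p_resultant n p \<pi> \<longleftrightarrow> (\<exists>c\<in>confS (n-1) p. topples_to (n-1) c \<pi>)"

definition perm_left :: "nat \<Rightarrow> nat \<Rightarrow> nat list \<Rightarrow> nat list" where
  "perm_left n p \<pi> = take (n - p) \<pi>"

definition perm_right :: "nat \<Rightarrow> nat \<Rightarrow> nat list \<Rightarrow> nat list" where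
  "perm_right n p \<pi> = drop (n - p) \<pi>"

definition num_ltr_max :: "nat list \<Rightarrow> nat" where
  "num_ltr_max xs = card {j. j < length xs \<and> (\<forall>i\<le>j. xs!i \<le> xs!j)}"

definition num_rtl_min :: "nat list \<Rightarrow> nat" where
  "num_rtl_min xs = card {j. j < length xs \<and> (\<forall>i. j \<le> i \<and> i < length xs \<longrightarrow> xs!j \<le> xs!i)}"

definition num_toppling_to :: "nat \<Rightarrow> nat \<Rightarrow> nat list \<Rightarrow> nat" where
  "num_toppling_to n p \<pi> = card {c \<in> confS (n-1) p. topples_to (n-1) c \<pi>}"

end

theory Submission
  imports Defs "HOL-Library.Multiset"
begin


fun bub :: "nat \<Rightarrow> nat list \<Rightarrow> nat list \<times> nat" where
  "bub c [] = ([], c)"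
| "bub c (y # ys) = (let (r, M) = bub (max c y) ys in (min c y # r, M))"

fun run :: "nat list \<Rightarrow> nat list \<Rightarrow> nat list \<times> nat list" where
  "run [] S = (S, [])"
| "run (x # xs) S = (let (S1, t1) = run xs S; (S2, d) = bub x S1 in (S2, d # t1))"

lemma bub_len: "length (fst (bub c L)) = length L"
  by (induction L arbitrary: c) (auto simp: split_beta)

lemma bub_mset: "mset (fst (bub c L)) + {#snd (bub c L)#} = mset (c # L)"
proof (induction L arbitrary: c)
  case Nil then show ?case by simp
next
  case (Cons y ys)
  have "mset (fst (bub (max c y) ys)) + {#snd (bub (max c y) ys)#} = mset (max c y # ys)"
    by (rule Cons.IH)
  then show ?case
    by (auto simp: split_beta max_def min_def)
qed

lemma bub_max: "snd (bub c L) = Max (set (c # L))"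
proof (induction L arbitrary: c)
  case Nil then show ?case by simp
next
  case (Cons a L)
  then show ?case by (cases "L = []") (auto simp: split_beta max.assoc)
qed

lemma bub_big: "(\<forall>y\<in>set L. y < c) \<Longrightarrow> bub c L = (L, c)"
  by (induction L) auto

lemma bub_append:
  "bub c (L1 @ L2) = (let (r1, M1) = bub c L1; (r2, M2) = bub M1 L2 in (r1 @ r2, M2))"
  by (induction L1 arbitrary: c) (auto simp: split_beta)

lemma run_len1: "length (fst (run xs S)) = length S"
  by (induction xs) (auto simp: split_beta bub_len)

lemma run_len2: "length (snd (run xs S)) = length xs"
  by (induction xs) (auto simp: split_beta)

lemma run_mset: "mset (fst (run xs S)) + mset (snd (run xs S)) = mset xs + mset S"
proof (induction xs)
  case Nil then show ?case by simp
next
  case (Cons x xs)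
  obtain S1 t1 where r: "run xs S = (S1, t1)" by fastforce
  obtain S2 d where b: "bub x S1 = (S2, d)" by fastforce
  have "mset S2 + {#d#} = mset (x # S1)" using bub_mset[of x S1] b by simp
  then have "add_mset d (mset S2 + mset t1) = add_mset x (mset S1) + mset t1" by simp
  also have "\<dots> = add_mset x (mset xs + mset S)" using Cons.IH r by simp
  finally show ?case using r b by simp
qed

definition isltr :: "nat list \<Rightarrow> nat \<Rightarrow> bool" where
  "isltr L i \<longleftrightarrow> (\<forall>j<i. L ! j < L ! i)"

definition ltrpos :: "nat list \<Rightarrow> nat list" where
  "ltrpos L = filter (isltr L) [0..<length L]"

definition ltr :: "nat list \<Rightarrow> nat" where
  "ltr L = length (ltrpos L)"

lemma ltrpos_lt: "i \<in> set (ltrpos L) \<Longrightarrow> i < length L"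
  by (auto simp: ltrpos_def)

function prelist :: "nat list \<Rightarrow> nat \<Rightarrow> (nat \<times> nat list) list" where
  "prelist \<sigma> d = (d, \<sigma>) # concat (map (\<lambda>i. map (\<lambda>(x, S). (x, S @ d # drop (Suc i) \<sigma>))
        (prelist (take i \<sigma>) (\<sigma> ! i))) (ltrpos \<sigma>))"
  by pat_completeness auto
termination
  by (relation "measure (\<lambda>(\<sigma>, d). length \<sigma>)") (auto dest: ltrpos_lt)

declare prelist.simps[simp del]

fun Om :: "nat \<Rightarrow> (nat \<Rightarrow> nat) \<Rightarrow> nat" where
  "Om k G = G k + sum_list (map (\<lambda>i. Om i (\<lambda>j. G (Suc j))) [0..<k])"

declare Om.simps[simp del]

fun Q :: "nat \<Rightarrow> nat \<Rightarrow> nat" where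
  "Q k 0 = 1"
| "Q k (Suc r) = Om k (\<lambda>j. Q j r)"

lemma bub_eq_mset: "bub x S1 = (\<sigma>, d) \<Longrightarrow> mset (x # S1) = mset (\<sigma> @ [d])"
  using bub_mset[of x S1] by simp

lemma bub_eq_set: "bub x S1 = (\<sigma>, d) \<Longrightarrow> set (x # S1) = insert d (set \<sigma>)"
  using mset_eq_setD[OF bub_eq_mset] by auto

lemma bub_eq_len: "bub x S1 = (\<sigma>, d) \<Longrightarrow> length S1 = length \<sigma>"
  using bub_len[of x S1] by simp

lemma bub_eq_max: "bub x S1 = (\<sigma>, d) \<Longrightarrow> d = Max (set (x # S1))"
  using bub_max[of x S1] by simp

lemma bub_eq_distinct:
  assumes "bub x S1 = (\<sigma>, d)" "distinct \<sigma>" "d \<notin> set \<sigma>"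
  shows "distinct (x # S1)"
proof -
  have "distinct (\<sigma> @ [d])" using assms by simp
  then show ?thesis using mset_eq_imp_distinct_iff[OF bub_eq_mset[OF assms(1)]] by simp
qed

lemma prelist_sound:
  "distinct \<sigma> \<Longrightarrow> (\<forall>s\<in>set \<sigma>. s < d) \<Longrightarrow> (x, S1) \<in> set (prelist \<sigma> d) \<Longrightarrow> bub x S1 = (\<sigma>, d)"
proof (induction \<sigma> d arbitrary: x S1 rule: prelist.induct)
  case (1 \<sigma> d)
  from "1.prems"(3) consider "(x, S1) = (d, \<sigma>)"
    | i S where "i \<in> set (ltrpos \<sigma>)" "(x, S) \<in> set (prelist (take i \<sigma>) (\<sigma> ! i))"
        "S1 = S @ d # drop (Suc i) \<sigma>"
    by (subst (asm) prelist.simps) auto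
  then show ?case
  proof cases
    case 1
    then show ?thesis using "1.prems" by (simp add: bub_big)
  next
    case 2
    have il: "i < length \<sigma>" using 2(1) ltrpos_lt by blast
    have lt: "\<forall>s\<in>set (take i \<sigma>). s < \<sigma> ! i"
      using 2(1) by (auto simp: ltrpos_def isltr_def in_set_conv_nth)
    have "bub x S = (take i \<sigma>, \<sigma> ! i)"
      using "1.IH"[OF 2(1) _ lt 2(2)] "1.prems"(1) by simp
    moreover have "\<sigma> ! i < d" using "1.prems"(2) il by simp
    moreover have "bub d (drop (Suc i) \<sigma>) = (drop (Suc i) \<sigma>, d)"
      using "1.prems"(2) by (intro bub_big) (auto dest: in_set_dropD)
    ultimately have "bub x S1 = (take i \<sigma> @ \<sigma> ! i # drop (Suc i) \<sigma>, d)"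
      using 2(3) by (simp add: bub_append max_def min_def)
    then show ?thesis using id_take_nth_drop[OF il] by simp
  qed
qed

lemma max_lt:
  assumes "d = Max (set L)" "y \<in> set L" "y \<noteq> d" shows "y < d"
proof -
  have "y \<le> d" using assms(1,2) by simp
  then show "y < d" using assms(3) by simp
qed

lemma prelist_complete:
  "distinct \<sigma> \<Longrightarrow> (\<forall>s\<in>set \<sigma>. s < d) \<Longrightarrow> bub x S1 = (\<sigma>, d) \<Longrightarrow> (x, S1) \<in> set (prelist \<sigma> d)"
proof (induction \<sigma> d arbitrary: x S1 rule: prelist.induct)
  case (1 \<sigma> d)
  have dn: "d \<notin> set \<sigma>" using "1.prems"(2) by auto
  have dist: "distinct (x # S1)" using bub_eq_distinct[OF "1.prems"(3) "1.prems"(1) dn] .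
  have dmax: "d = Max (set (x # S1))" using bub_eq_max[OF "1.prems"(3)] .
  have dmem: "d \<in> set (x # S1)" using bub_eq_set[OF "1.prems"(3)] by auto
  show ?case
  proof (cases "x = d")
    case True
    then have "\<forall>y\<in>set S1. y < x" using dist dmax max_lt[OF dmax] by auto
    then have "bub x S1 = (S1, x)" by (rule bub_big)
    then have "S1 = \<sigma>" using "1.prems"(3) True by simp
    then show ?thesis using True by (subst prelist.simps) simp
  next
    case False
    then have "d \<in> set S1" using dmem by simp
    then obtain S B where S1: "S1 = S @ d # B" by (meson split_list)
    obtain r1 M1 where b1: "bub x S = (r1, M1)" by fastforce
    have "M1 = Max (set (x # S))" using bub_eq_max[OF b1] .
    moreover have "\<forall>y\<in>set (x # S). y < d"
      using dist S1 max_lt[OF dmax] by auto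
    ultimately have M1d: "M1 < d" by simp
    have Bd: "\<forall>y\<in>set B. y < d"
      using dist S1 max_lt[OF dmax] by auto
    have "bub x S1 = (r1 @ M1 # B, d)"
      using S1 b1 M1d bub_big[OF Bd] by (simp add: bub_append max_def min_def)
    then have sig: "\<sigma> = r1 @ M1 # B" using "1.prems"(3) by simp
    define i where "i = length r1"
    have il: "i < length \<sigma>" using sig i_def by simp
    have tk: "take i \<sigma> = r1" "\<sigma> ! i = M1" "drop (Suc i) \<sigma> = B"
      using sig i_def by auto
    have r1M: "\<forall>s\<in>set r1. s < M1"
    proof
      fix s assume s: "s \<in> set r1"
      have "s \<in> set (x # S)" using bub_eq_set[OF b1] s by auto
      then have "s \<le> M1" using \<open>M1 = Max (set (x # S))\<close> by simp
      moreover have "s \<noteq> M1" using "1.prems"(1) sig s by auto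
      ultimately show "s < M1" by simp
    qed
    have "i \<in> set (ltrpos \<sigma>)"
      using il r1M tk unfolding ltrpos_def isltr_def
      by (auto simp: sig i_def nth_append)
    moreover have "(x, S) \<in> set (prelist (take i \<sigma>) (\<sigma> ! i))"
      using "1.IH"[OF \<open>i \<in> set (ltrpos \<sigma>)\<close>] distinct_take[OF "1.prems"(1), of i] r1M tk b1 by simp
    ultimately show ?thesis
      using S1 tk by (subst prelist.simps) force
  qed
qed

definition ptail :: "nat list \<Rightarrow> nat \<Rightarrow> (nat \<times> nat list) list" where
  "ptail \<sigma> d = concat (map (\<lambda>i. map (\<lambda>(x, S). (x, S @ d # drop (Suc i) \<sigma>))
        (prelist (take i \<sigma>) (\<sigma> ! i))) (ltrpos \<sigma>))"

lemma prelist_ptail: "prelist \<sigma> d = (d, \<sigma>) # ptail \<sigma> d"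
  unfolding ptail_def by (subst prelist.simps) simp

lemma ltrpos_isltr: "i \<in> set (ltrpos \<sigma>) \<Longrightarrow> isltr \<sigma> i"
  by (auto simp: ltrpos_def)

lemma ltrpos_take_lt: "i \<in> set (ltrpos \<sigma>) \<Longrightarrow> \<forall>s\<in>set (take i \<sigma>). s < \<sigma> ! i"
  by (auto simp: ltrpos_def isltr_def in_set_conv_nth)

lemma ptail_d:
  assumes "distinct \<sigma>" "\<forall>s\<in>set \<sigma>. s < d" "(x, S1) \<in> set (ptail \<sigma> d)"
  shows "d \<in> set S1"
  using assms(3) unfolding ptail_def by auto

lemma prelist_distinct:
  "distinct \<sigma> \<Longrightarrow> (\<forall>s\<in>set \<sigma>. s < d) \<Longrightarrow> distinct (prelist \<sigma> d)"
proof (induction \<sigma> d rule: prelist.induct)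
  case (1 \<sigma> d)
  define f where "f = (\<lambda>i. map (\<lambda>(x, S). (x, S @ d # drop (Suc i) \<sigma>))
        (prelist (take i \<sigma>) (\<sigma> ! i)))"
  have pt: "ptail \<sigma> d = concat (map f (ltrpos \<sigma>))" unfolding ptail_def f_def ..
  have dn: "d \<notin> set \<sigma>" using "1.prems"(2) by auto
  have fdist: "distinct (f i)" if i: "i \<in> set (ltrpos \<sigma>)" for i
  proof -
    have "distinct (prelist (take i \<sigma>) (\<sigma> ! i))"
      using "1.IH"[OF i] "1.prems"(1) ltrpos_take_lt[OF i] by simp
    moreover have "inj_on (\<lambda>(x::nat, S::nat list). (x, S @ d # drop (Suc i) \<sigma>)) A" for A
      by (auto simp: inj_on_def)
    ultimately show ?thesis unfolding f_def distinct_map by blast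
  qed
  have fmem: "\<exists>x S. e = (x, S @ d # drop (Suc i) \<sigma>) \<and> length S = i \<and> d \<notin> set S"
    if i: "i \<in> set (ltrpos \<sigma>)" and e: "e \<in> set (f i)" for i e
  proof -
    obtain x S where xS: "(x, S) \<in> set (prelist (take i \<sigma>) (\<sigma> ! i))"
      "e = (x, S @ d # drop (Suc i) \<sigma>)"
      using e unfolding f_def by auto
    have il: "i < length \<sigma>" using i ltrpos_lt by blast
    have b: "bub x S = (take i \<sigma>, \<sigma> ! i)"
      using prelist_sound[OF _ ltrpos_take_lt[OF i] xS(1)] "1.prems"(1) by simp
    have "length S = i" using bub_eq_len[OF b] il by simp
    moreover have "set (x # S) \<subseteq> set \<sigma>"
      using bub_eq_set[OF b] il by (auto dest: in_set_takeD)
    ultimately show ?thesis using xS(2) dn by auto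
  qed
  have fdisj: "set (f i) \<inter> set (f j) = {}"
    if i: "i \<in> set (ltrpos \<sigma>)" and j: "j \<in> set (ltrpos \<sigma>)" and ij: "i \<noteq> j" for i j
  proof (rule ccontr)
    assume "set (f i) \<inter> set (f j) \<noteq> {}"
    then obtain e where e1: "e \<in> set (f i)" and e2: "e \<in> set (f j)" by blast
    obtain x S where A: "e = (x, S @ d # drop (Suc i) \<sigma>)" "length S = i" "d \<notin> set S"
      using fmem[OF i e1] by blast
    obtain x' S' where B: "e = (x', S' @ d # drop (Suc j) \<sigma>)" "length S' = j" "d \<notin> set S'"
      using fmem[OF j e2] by blast
    from A B have "S @ d # drop (Suc i) \<sigma> = S' @ d # drop (Suc j) \<sigma>" by simp
    moreover have "d \<notin> set (drop (Suc i) \<sigma>)" using dn by (auto dest: in_set_dropD)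
    ultimately have "S = S'" using append_Cons_eq_iff[OF A(3)] by simp
    then show False using A(2) B(2) ij by simp
  qed
  have fne: "f i \<noteq> []" for i unfolding f_def by (subst prelist.simps) simp
  have "inj_on f (set (ltrpos \<sigma>))"
  proof (rule inj_onI)
    fix i j assume "i \<in> set (ltrpos \<sigma>)" "j \<in> set (ltrpos \<sigma>)" "f i = f j"
    show "i = j"
    proof (rule ccontr)
      assume "i \<noteq> j"
      then have "set (f i) \<inter> set (f j) = {}" using fdisj \<open>i \<in> _\<close> \<open>j \<in> _\<close> by blast
      then have "set (f i) = {}" using \<open>f i = f j\<close> by simp
      then show False using fne[of i] by simp
    qed
  qed
  moreover have "distinct (ltrpos \<sigma>)" unfolding ltrpos_def by simp
  ultimately have "distinct (map f (ltrpos \<sigma>))" by (simp add: distinct_map)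
  then have "distinct (ptail \<sigma> d)"
    unfolding pt
  proof (rule distinct_concat)
    fix ys assume "ys \<in> set (map f (ltrpos \<sigma>))"
    then show "distinct ys" using fdist by auto
  next
    fix ys zs assume "ys \<in> set (map f (ltrpos \<sigma>))" "zs \<in> set (map f (ltrpos \<sigma>))" "ys \<noteq> zs"
    then obtain i j where "i \<in> set (ltrpos \<sigma>)" "j \<in> set (ltrpos \<sigma>)" "ys = f i" "zs = f j"
      by auto
    then show "set ys \<inter> set zs = {}" using fdisj \<open>ys \<noteq> zs\<close> by blast
  qed
  moreover have "(d, \<sigma>) \<notin> set (ptail \<sigma> d)"
    using ptail_d[OF "1.prems"] dn by blast
  ultimately show ?case by (simp add: prelist_ptail)
qed


lemma ltr_app:
  assumes S: "\<forall>s\<in>set S. s < d" and B: "\<forall>b\<in>set B. b < d"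
  shows "ltr (S @ d # B) = Suc (ltr S)"
proof -
  let ?L = "S @ d # B"
  have up: "[0..<length ?L] = [0..<length S] @ [length S] @ [Suc (length S)..<length ?L]"
  proof -
    have "[0..<length ?L] = [0..<length S] @ [length S..<length ?L]"
      using upt_add_eq_append[of 0 "length S" "Suc (length B)"] by simp
    moreover have "[length S..<length ?L] = length S # [Suc (length S)..<length ?L]"
      by (rule upt_conv_Cons) simp
    ultimately show ?thesis by simp
  qed
  have f1: "filter (isltr ?L) [0..<length S] = filter (isltr S) [0..<length S]"
    by (rule filter_cong) (auto simp: isltr_def nth_append)
  have f2: "isltr ?L (length S)"
    using S by (auto simp: isltr_def nth_append)
  have f3: "filter (isltr ?L) [Suc (length S)..<length ?L] = []"
  proof -
    have "\<not> isltr ?L i" if "i \<in> set [Suc (length S)..<length ?L]" for i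
    proof -
      have i: "Suc (length S) \<le> i" "i < length ?L" using that by auto
      obtain k where k: "i = Suc (length S) + k" using i(1) le_Suc_ex by blast
      have e: "?L ! i = B ! k" using k by (simp add: nth_append)
      have "k < length B" using i k by simp
      then have "?L ! i \<in> set B" unfolding e by (rule nth_mem)
      then have "?L ! i < ?L ! length S" using B by (simp add: nth_append)
      then show ?thesis using i unfolding isltr_def by (meson Suc_le_lessD not_less_iff_gr_or_eq)
    qed
    then show ?thesis by (simp add: filter_empty_conv)
  qed
  show ?thesis unfolding ltr_def ltrpos_def up using f1 f2 f3 by simp
qed

lemma filter_len_map:
  "map (\<lambda>i. length (filter P [0..<i])) (filter P [0..<n]) = [0..<length (filter P [0..<n])]"
proof (induction n)
  case 0 then show ?case by simp
next
  case (Suc n)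
  then show ?case by simp
qed

lemma ltr_take:
  assumes "i \<le> length \<sigma>" shows "ltr (take i \<sigma>) = length (filter (isltr \<sigma>) [0..<i])"
proof -
  have l: "length (take i \<sigma>) = i" using assms by simp
  have "filter (isltr (take i \<sigma>)) [0..<i] = filter (isltr \<sigma>) [0..<i]"
    by (rule filter_cong) (auto simp: isltr_def)
  then show ?thesis unfolding ltr_def ltrpos_def l by simp
qed

lemma ltr_take_map: "map (\<lambda>i. ltr (take i \<sigma>)) (ltrpos \<sigma>) = [0..<ltr \<sigma>]"
proof -
  have "map (\<lambda>i. ltr (take i \<sigma>)) (ltrpos \<sigma>) =
        map (\<lambda>i. length (filter (isltr \<sigma>) [0..<i])) (ltrpos \<sigma>)"
    by (rule map_cong[OF refl]) (simp add: ltr_take less_imp_le ltrpos_lt)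
  also have "\<dots> = [0..<ltr \<sigma>]"
    unfolding ltr_def ltrpos_def by (rule filter_len_map)
  finally show ?thesis .
qed

lemma sum_list_concat': "sum_list (concat xss) = sum_list (map sum_list (xss :: nat list list))"
  by (induction xss) auto

lemma prelist_weight:
  "distinct \<sigma> \<Longrightarrow> (\<forall>s\<in>set \<sigma>. s < d) \<Longrightarrow>
   sum_list (map (\<lambda>(x, S). G (ltr S)) (prelist \<sigma> d)) = Om (ltr \<sigma>) G"
proof (induction \<sigma> d arbitrary: G rule: prelist.induct)
  case (1 \<sigma> d)
  define g where "g = (\<lambda>i. map (\<lambda>(x, S). (x, S @ d # drop (Suc i) \<sigma>))
        (prelist (take i \<sigma>) (\<sigma> ! i)))"
  have inner: "sum_list (map (\<lambda>(x, S). G (ltr S)) (g i)) = Om (ltr (take i \<sigma>)) (\<lambda>j. G (Suc j))"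
    if i: "i \<in> set (ltrpos \<sigma>)" for i
  proof -
    have il: "i < length \<sigma>" using i ltrpos_lt by blast
    have "sum_list (map (\<lambda>(x, S). G (ltr S)) (g i)) =
          sum_list (map (\<lambda>(x, S). G (ltr (S @ d # drop (Suc i) \<sigma>))) (prelist (take i \<sigma>) (\<sigma> ! i)))"
      unfolding g_def map_map by (rule arg_cong[where f=sum_list], rule map_cong[OF refl]) (auto split: prod.splits)
    also have "\<dots> = sum_list (map (\<lambda>(x, S). G (Suc (ltr S))) (prelist (take i \<sigma>) (\<sigma> ! i)))"
    proof (rule arg_cong[where f=sum_list], rule map_cong[OF refl], clarify)
      fix x S assume xS: "(x, S) \<in> set (prelist (take i \<sigma>) (\<sigma> ! i))"
      have b: "bub x S = (take i \<sigma>, \<sigma> ! i)"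
        using prelist_sound[OF _ ltrpos_take_lt[OF i] xS] "1.prems"(1) by simp
      have "set (x # S) \<subseteq> set \<sigma>"
        using bub_eq_set[OF b] il by (auto dest: in_set_takeD)
      then have "set S \<subseteq> set \<sigma>" by simp
      then have "\<forall>s\<in>set S. s < d" using "1.prems"(2) by auto
      moreover have "\<forall>b\<in>set (drop (Suc i) \<sigma>). b < d" using "1.prems"(2) by (auto dest: in_set_dropD)
      ultimately show "G (ltr (S @ d # drop (Suc i) \<sigma>)) = G (Suc (ltr S))" by (simp add: ltr_app)
    qed
    also have "\<dots> = Om (ltr (take i \<sigma>)) (\<lambda>j. G (Suc j))"
      using "1.IH"[OF i, of "\<lambda>j. G (Suc j)"] "1.prems"(1) ltrpos_take_lt[OF i] by simp
    finally show ?thesis .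
  qed
  have "sum_list (map (\<lambda>(x, S). G (ltr S)) (prelist \<sigma> d)) =
        G (ltr \<sigma>) + sum_list (map (\<lambda>i. sum_list (map (\<lambda>(x, S). G (ltr S)) (g i))) (ltrpos \<sigma>))"
    apply (subst prelist_ptail)
    apply (simp only: ptail_def g_def[symmetric])
    apply (simp add: map_concat sum_list_concat' comp_def)
    done
  also have "\<dots> = G (ltr \<sigma>) + sum_list (map (\<lambda>i. Om (ltr (take i \<sigma>)) (\<lambda>j. G (Suc j))) (ltrpos \<sigma>))"
    using inner by (simp cong: map_cong)
  also have "map (\<lambda>i. Om (ltr (take i \<sigma>)) (\<lambda>j. G (Suc j))) (ltrpos \<sigma>) =
             map (\<lambda>j. Om j (\<lambda>j. G (Suc j))) (map (\<lambda>i. ltr (take i \<sigma>)) (ltrpos \<sigma>))"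
    by simp
  also have "\<dots> = map (\<lambda>j. Om j (\<lambda>j. G (Suc j))) [0..<ltr \<sigma>]"
    by (simp only: ltr_take_map)
  finally show ?case by (simp add: Om.simps[of "ltr \<sigma>"])
qed

definition isrtl :: "nat list \<Rightarrow> nat \<Rightarrow> bool" where
  "isrtl L i \<longleftrightarrow> (\<forall>j. i < j \<and> j < length L \<longrightarrow> L ! i < L ! j)"

definition rtl :: "nat list \<Rightarrow> nat" where
  "rtl L = length (filter (isrtl L) [0..<length L])"

lemma rtl_Cons: "rtl (d # \<tau>) = (if \<forall>y\<in>set \<tau>. d < y then Suc (rtl \<tau>) else rtl \<tau>)"
proof -
  have up: "[0..<length (d # \<tau>)] = 0 # map Suc [0..<length \<tau>]"
    by (simp add: map_Suc_upt upt_conv_Cons del: upt_Suc)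
  have h0: "isrtl (d # \<tau>) 0 \<longleftrightarrow> (\<forall>y\<in>set \<tau>. d < y)"
  proof
    assume a: "isrtl (d # \<tau>) 0"
    show "\<forall>y\<in>set \<tau>. d < y"
    proof
      fix y assume "y \<in> set \<tau>"
      then obtain j where "j < length \<tau>" "\<tau> ! j = y" by (auto simp: in_set_conv_nth)
      then show "d < y" using a[unfolded isrtl_def, rule_format, of "Suc j"] by simp
    qed
  next
    assume a: "\<forall>y\<in>set \<tau>. d < y"
    show "isrtl (d # \<tau>) 0" unfolding isrtl_def
    proof (intro allI impI)
      fix j assume "0 < j \<and> j < length (d # \<tau>)"
      then obtain j' where "j = Suc j'" "j' < length \<tau>" by (cases j) auto
      then show "(d # \<tau>) ! 0 < (d # \<tau>) ! j" using a by simp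
    qed
  qed
  have hS: "filter (isrtl (d # \<tau>) \<circ> Suc) [0..<length \<tau>] = filter (isrtl \<tau>) [0..<length \<tau>]"
  proof (rule filter_cong[OF refl])
    fix i assume "i \<in> set [0..<length \<tau>]"
    show "(isrtl (d # \<tau>) \<circ> Suc) i = isrtl \<tau> i"
      unfolding isrtl_def comp_def
    proof
      assume a: "\<forall>j. Suc i < j \<and> j < length (d # \<tau>) \<longrightarrow> (d # \<tau>) ! Suc i < (d # \<tau>) ! j"
      show "\<forall>j. i < j \<and> j < length \<tau> \<longrightarrow> \<tau> ! i < \<tau> ! j"
      proof (intro allI impI)
        fix j assume "i < j \<and> j < length \<tau>"
        then show "\<tau> ! i < \<tau> ! j" using a[rule_format, of "Suc j"] by simp
      qed
    next
      assume a: "\<forall>j. i < j \<and> j < length \<tau> \<longrightarrow> \<tau> ! i < \<tau> ! j"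
      show "\<forall>j. Suc i < j \<and> j < length (d # \<tau>) \<longrightarrow> (d # \<tau>) ! Suc i < (d # \<tau>) ! j"
      proof (intro allI impI)
        fix j assume j: "Suc i < j \<and> j < length (d # \<tau>)"
        then obtain j' where "j = Suc j'" by (cases j) auto
        then show "(d # \<tau>) ! Suc i < (d # \<tau>) ! j" using a j by simp
      qed
    qed
  qed
  show ?thesis
    unfolding rtl_def up using h0 hS by (simp add: filter_map)
qed

definition Fset :: "nat list \<Rightarrow> nat list \<Rightarrow> (nat list \<times> nat list) set" where
  "Fset \<sigma> \<tau> = {(xs, S). length xs = length \<tau> \<and> length S = length \<sigma> \<and> run xs S = (\<sigma>, \<tau>)}"

definition gt :: "nat list \<Rightarrow> nat list \<Rightarrow> bool" where
  "gt \<sigma> \<tau> \<longleftrightarrow> (\<forall>s\<in>set \<sigma>. \<forall>y\<in>set \<tau>. s < y)"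

lemma run_eq_set: "run xs S = (\<sigma>, \<tau>) \<Longrightarrow> set xs \<union> set S = set \<sigma> \<union> set \<tau>"
proof -
  assume r: "run xs S = (\<sigma>, \<tau>)"
  have "mset \<sigma> + mset \<tau> = mset xs + mset S" using run_mset[of xs S] r by simp
  then have "set_mset (mset \<sigma> + mset \<tau>) = set_mset (mset xs + mset S)" by simp
  then show ?thesis by simp
qed

lemma Fset_finite: "finite (Fset \<sigma> \<tau>)"
proof -
  let ?A = "set \<sigma> \<union> set \<tau>"
  have "Fset \<sigma> \<tau> \<subseteq> {xs. set xs \<subseteq> ?A \<and> length xs = length \<tau>} \<times> {S. set S \<subseteq> ?A \<and> length S = length \<sigma>}"
    unfolding Fset_def using run_eq_set by fastforce
  moreover have "finite ({xs. set xs \<subseteq> ?A \<and> length xs = length \<tau>} \<times> {S. set S \<subseteq> ?A \<and> length S = length \<sigma>})"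
    by (intro finite_cartesian_product finite_lists_length_eq) auto
  ultimately show ?thesis by (rule finite_subset)
qed

lemma Fset_Cons:
  assumes "distinct \<sigma>" "\<forall>s\<in>set \<sigma>. s < d"
  shows "Fset \<sigma> (d # \<tau>1) = (\<Union>e\<in>set (prelist \<sigma> d). (\<lambda>(xs, S). (fst e # xs, S)) ` Fset (snd e) \<tau>1)"
proof
  show "Fset \<sigma> (d # \<tau>1) \<subseteq> (\<Union>e\<in>set (prelist \<sigma> d). (\<lambda>(xs, S). (fst e # xs, S)) ` Fset (snd e) \<tau>1)"
  proof
    fix p assume "p \<in> Fset \<sigma> (d # \<tau>1)"
    then obtain xs' S where p: "p = (xs', S)" "length xs' = Suc (length \<tau>1)" "length S = length \<sigma>"
      "run xs' S = (\<sigma>, d # \<tau>1)" unfolding Fset_def by auto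
    then obtain x xs where xs': "xs' = x # xs" by (cases xs') auto
    obtain S1 t1 where r: "run xs S = (S1, t1)" by fastforce
    obtain S2 d2 where b: "bub x S1 = (S2, d2)" by fastforce
    have "S2 = \<sigma>" "d2 = d" "t1 = \<tau>1" using p(4) xs' r b by auto
    then have b': "bub x S1 = (\<sigma>, d)" using b by simp
    have e: "(x, S1) \<in> set (prelist \<sigma> d)" using prelist_complete[OF assms b'] .
    have "length S1 = length S" using run_len1[of xs S] r by simp
    then have "(xs, S) \<in> Fset S1 \<tau>1"
      unfolding Fset_def using p(2) xs' r \<open>t1 = \<tau>1\<close> by simp
    then show "p \<in> (\<Union>e\<in>set (prelist \<sigma> d). (\<lambda>(xs, S). (fst e # xs, S)) ` Fset (snd e) \<tau>1)"
      using e p(1) xs' by force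
  qed
next
  show "(\<Union>e\<in>set (prelist \<sigma> d). (\<lambda>(xs, S). (fst e # xs, S)) ` Fset (snd e) \<tau>1) \<subseteq> Fset \<sigma> (d # \<tau>1)"
  proof clarify
    fix x S1 xs S assume e: "(x, S1) \<in> set (prelist \<sigma> d)" and f: "(xs, S) \<in> Fset (snd (x, S1)) \<tau>1"
    have b: "bub x S1 = (\<sigma>, d)" using prelist_sound[OF assms e] .
    from f have f': "length xs = length \<tau>1" "length S = length S1" "run xs S = (S1, \<tau>1)"
      unfolding Fset_def by auto
    show "(fst (x, S1) # xs, S) \<in> Fset \<sigma> (d # \<tau>1)"
      unfolding Fset_def using f' b bub_eq_len[OF b] by simp
  qed
qed

lemma Fset_Cons_empty:
  assumes "\<not> (\<forall>s\<in>set \<sigma>. s < d)" "distinct (\<sigma> @ [d])"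
  shows "Fset \<sigma> (d # \<tau>1) = {}"
proof (rule ccontr)
  assume "Fset \<sigma> (d # \<tau>1) \<noteq> {}"
  then obtain xs' S where p: "length xs' = Suc (length \<tau>1)" "run xs' S = (\<sigma>, d # \<tau>1)"
    unfolding Fset_def by auto
  then obtain x xs where xs': "xs' = x # xs" by (cases xs') auto
  obtain S1 t1 where r: "run xs S = (S1, t1)" by fastforce
  obtain S2 d2 where b: "bub x S1 = (S2, d2)" by fastforce
  have "S2 = \<sigma>" "d2 = d" using p(2) xs' r b by auto
  then have b': "bub x S1 = (\<sigma>, d)" using b by simp
  from assms(1) obtain s where s: "s \<in> set \<sigma>" "\<not> s < d" by blast
  have "s \<in> set (x # S1)" using bub_eq_set[OF b'] s by auto
  then have "s \<le> d" using bub_eq_max[OF b'] by simp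
  moreover have "s \<noteq> d" using assms(2) s by auto
  ultimately show False using s by simp
qed

lemma sum_list_zero: "(\<forall>x\<in>set xs. f x = (0::nat)) \<Longrightarrow> sum_list (map f xs) = 0"
  by (induction xs) auto

lemma card_Fset:
  "distinct (\<sigma> @ \<tau>) \<Longrightarrow> card (Fset \<sigma> \<tau>) = (if gt \<sigma> \<tau> then Q (ltr \<sigma>) (rtl \<tau>) else 0)"
proof (induction \<tau> arbitrary: \<sigma>)
  case Nil
  have "Fset \<sigma> [] = {([], \<sigma>)}" unfolding Fset_def by auto
  then show ?case by (simp add: gt_def rtl_def)
next
  case (Cons d \<tau>1)
  show ?case
  proof (cases "\<forall>s\<in>set \<sigma>. s < d")
    case False
    then have "Fset \<sigma> (d # \<tau>1) = {}" using Fset_Cons_empty Cons.prems by simp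
    moreover have "\<not> gt \<sigma> (d # \<tau>1)" using False by (auto simp: gt_def)
    ultimately show ?thesis by simp
  next
    case True
    have ds: "distinct \<sigma>" using Cons.prems by simp
    define A where "A = (\<lambda>e::nat \<times> nat list. (\<lambda>(xs, S). (fst e # xs, S)) ` Fset (snd e) \<tau>1)"
    have "card (Fset \<sigma> (d # \<tau>1)) = card (\<Union>(A ` set (prelist \<sigma> d)))"
      unfolding A_def using Fset_Cons[OF ds True] by simp
    also have "\<dots> = (\<Sum>e\<in>set (prelist \<sigma> d). card (A e))"
    proof (rule card_UN_disjoint)
      show "\<forall>e\<in>set (prelist \<sigma> d). finite (A e)" unfolding A_def using Fset_finite by blast
      show "\<forall>e\<in>set (prelist \<sigma> d). \<forall>e'\<in>set (prelist \<sigma> d). e \<noteq> e' \<longrightarrow> A e \<inter> A e' = {}"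
      proof (intro ballI impI)
        fix e e' assume "e \<in> set (prelist \<sigma> d)" "e' \<in> set (prelist \<sigma> d)" "e \<noteq> e'"
        show "A e \<inter> A e' = {}"
        proof (rule ccontr)
          assume "A e \<inter> A e' \<noteq> {}"
          then obtain z where z1: "z \<in> A e" and z2: "z \<in> A e'" by blast
          from z1 obtain xs S where 1: "(xs, S) \<in> Fset (snd e) \<tau>1" "z = (fst e # xs, S)"
            unfolding A_def by auto
          from z2 obtain xs' S' where 2: "(xs', S') \<in> Fset (snd e') \<tau>1" "z = (fst e' # xs', S')"
            unfolding A_def by auto
          from 1 2 have "fst e = fst e'" "run xs S = (snd e, \<tau>1)" "run xs S = (snd e', \<tau>1)"
            unfolding Fset_def by auto
          then have "e = e'" by (simp add: prod_eq_iff)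
          then show False using \<open>e \<noteq> e'\<close> by simp
        qed
      qed
    qed simp
    also have "\<dots> = (\<Sum>e\<in>set (prelist \<sigma> d). card (Fset (snd e) \<tau>1))"
    proof (rule sum.cong[OF refl])
      fix e show "card (A e) = card (Fset (snd e) \<tau>1)"
        unfolding A_def by (rule card_image) (auto simp: inj_on_def)
    qed
    also have "\<dots> = sum_list (map (\<lambda>e. card (Fset (snd e) \<tau>1)) (prelist \<sigma> d))"
      using prelist_distinct[OF ds True] by (simp add: sum_list_distinct_conv_sum_set)
    also have "\<dots> = sum_list (map (\<lambda>e. if gt (snd e) \<tau>1 then Q (ltr (snd e)) (rtl \<tau>1) else 0) (prelist \<sigma> d))"
    proof (rule arg_cong[where f=sum_list], rule map_cong[OF refl])
      fix e assume e: "e \<in> set (prelist \<sigma> d)"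
      obtain x S1 where eq: "e = (x, S1)" by fastforce
      have b: "bub x S1 = (\<sigma>, d)" using prelist_sound[OF ds True] e eq by simp
      have "distinct (x # S1)" using bub_eq_distinct[OF b ds] True by auto
      moreover have "set S1 \<subseteq> insert d (set \<sigma>)" using bub_eq_set[OF b] by auto
      ultimately have "distinct (S1 @ \<tau>1)" using Cons.prems by auto
      then show "card (Fset (snd e) \<tau>1) = (if gt (snd e) \<tau>1 then Q (ltr (snd e)) (rtl \<tau>1) else 0)"
        using Cons.IH eq by simp
    qed
    also have "\<dots> = (if gt \<sigma> (d # \<tau>1) then Q (ltr \<sigma>) (rtl (d # \<tau>1)) else 0)"
    proof (cases "gt \<sigma> \<tau>1")
      case gs: True
      show ?thesis
      proof (cases "\<forall>y\<in>set \<tau>1. d < y")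
        case dmin: True
        have "sum_list (map (\<lambda>e. if gt (snd e) \<tau>1 then Q (ltr (snd e)) (rtl \<tau>1) else 0) (prelist \<sigma> d))
            = sum_list (map (\<lambda>(x, S). (\<lambda>k. Q k (rtl \<tau>1)) (ltr S)) (prelist \<sigma> d))"
        proof (rule arg_cong[where f=sum_list], rule map_cong[OF refl])
          fix e assume e: "e \<in> set (prelist \<sigma> d)"
          obtain x S1 where eq: "e = (x, S1)" by fastforce
          have b: "bub x S1 = (\<sigma>, d)" using prelist_sound[OF ds True] e eq by simp
          have "set S1 \<subseteq> insert d (set \<sigma>)" using bub_eq_set[OF b] by auto
          then have "gt S1 \<tau>1" using gs dmin unfolding gt_def by auto
          then show "(if gt (snd e) \<tau>1 then Q (ltr (snd e)) (rtl \<tau>1) else 0) =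
                (\<lambda>(x, S). (\<lambda>k. Q k (rtl \<tau>1)) (ltr S)) e" using eq by simp
        qed
        also have "\<dots> = Om (ltr \<sigma>) (\<lambda>k. Q k (rtl \<tau>1))"
          by (rule prelist_weight[OF ds True])
        also have "\<dots> = Q (ltr \<sigma>) (rtl (d # \<tau>1))" using dmin by (simp add: rtl_Cons)
        finally show ?thesis using gs True by (simp add: gt_def)
      next
        case dmin: False
        have "sum_list (map (\<lambda>e. if gt (snd e) \<tau>1 then Q (ltr (snd e)) (rtl \<tau>1) else 0) (ptail \<sigma> d)) = 0"
        proof (rule sum_list_zero, rule ballI)
          fix e assume e: "e \<in> set (ptail \<sigma> d)"
          obtain x S1 where eq: "e = (x, S1)" by fastforce
          have "d \<in> set S1" using ptail_d[OF ds True] e eq by simp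
          moreover obtain y where "y \<in> set \<tau>1" "\<not> d < y" using dmin by blast
          ultimately have "\<not> gt S1 \<tau>1" unfolding gt_def by auto
          then show "(if gt (snd e) \<tau>1 then Q (ltr (snd e)) (rtl \<tau>1) else 0) = 0" using eq by simp
        qed
        moreover have "gt \<sigma> (d # \<tau>1)" using gs True unfolding gt_def by auto
        moreover have "rtl (d # \<tau>1) = rtl \<tau>1" using dmin by (simp add: rtl_Cons)
        ultimately show ?thesis using gs by (simp add: prelist_ptail)
      qed
    next
      case gs: False
      have "sum_list (map (\<lambda>e. if gt (snd e) \<tau>1 then Q (ltr (snd e)) (rtl \<tau>1) else 0) (ptail \<sigma> d)) = 0"
      proof (rule sum_list_zero, rule ballI)
        fix e assume e: "e \<in> set (ptail \<sigma> d)"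
        obtain x S1 where eq: "e = (x, S1)" by fastforce
        have "d \<in> set S1" using ptail_d[OF ds True] e eq by simp
        moreover obtain s y where "s \<in> set \<sigma>" "y \<in> set \<tau>1" "\<not> s < y" using gs unfolding gt_def by blast
        moreover have "s < d" using True \<open>s \<in> set \<sigma>\<close> by blast
        ultimately have "\<not> gt S1 \<tau>1" unfolding gt_def by force
        then show "(if gt (snd e) \<tau>1 then Q (ltr (snd e)) (rtl \<tau>1) else 0) = 0" using eq by simp
      qed
      moreover have "\<not> gt \<sigma> (d # \<tau>1)" using gs unfolding gt_def by auto
      ultimately show ?thesis using gs by (simp add: prelist_ptail)
    qed
    finally show ?thesis .
  qed
qed


lemma wave:
  assumes "distinct (z # ys)" "set (z # ys) \<subseteq> {1..m+1}" "c z = s"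
    "\<forall>i<length ys. c (ys ! i) = s + int i"
  shows "\<exists>c'. (topple_step m)\<^sup>*\<^sup>* c c' \<and> (\<forall>x. x \<notin> set (z # ys) \<longrightarrow> c' x = c x) \<and>
     c' (snd (bub z ys)) = s + int (length ys) \<and>
     (\<forall>i<length ys. c' (fst (bub z ys) ! i) = (if i = 0 then s - 1 else s + int i - 1))"
  using assms
proof (induction ys arbitrary: z c s)
  case Nil
  then show ?case by auto
next
  case (Cons y ys)
  define \<alpha> where "\<alpha> = min z y"
  define \<beta> where "\<beta> = max z y"
  have zy: "z \<noteq> y" using Cons.prems(1) by auto
  have ab: "\<alpha> < \<beta>" using zy unfolding \<alpha>_def \<beta>_def by auto
  have cy: "c y = s" using Cons.prems(4)[rule_format, of 0] by simp
  have ca: "c \<alpha> = s" "c \<beta> = s" using cy Cons.prems(3) unfolding \<alpha>_def \<beta>_def by (auto simp: min_def max_def)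
  have rng: "1 \<le> \<alpha>" "\<beta> \<le> m + 1" using Cons.prems(2) unfolding \<alpha>_def \<beta>_def by (auto simp: min_def max_def)
  define c1 where "c1 = c(\<alpha> := s - 1, \<beta> := s + 1)"
  have step: "topple_step m c c1"
    unfolding topple_step_def c1_def using ab ca rng by (intro exI[of _ \<alpha>] exI[of _ \<beta>]) auto
  have abset: "{\<alpha>, \<beta>} = {z, y}" unfolding \<alpha>_def \<beta>_def by (auto simp: min_def max_def)
  have d1: "distinct (\<beta> # ys)" using Cons.prems(1) abset unfolding \<beta>_def by (auto simp: max_def)
  have s1: "set (\<beta> # ys) \<subseteq> {1..m+1}" using Cons.prems(2) unfolding \<beta>_def by (auto simp: max_def)
  have c1b: "c1 \<beta> = s + 1" unfolding c1_def by simp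
  have c1ys: "\<forall>i<length ys. c1 (ys ! i) = (s + 1) + int i"
  proof (intro allI impI)
    fix i assume i: "i < length ys"
    have "ys ! i \<noteq> z" "ys ! i \<noteq> y" using Cons.prems(1) i by (auto dest: nth_mem)
    then have "ys ! i \<noteq> \<alpha>" "ys ! i \<noteq> \<beta>" unfolding \<alpha>_def \<beta>_def by (auto simp: min_def max_def)
    then have "c1 (ys ! i) = c (ys ! i)" unfolding c1_def by simp
    also have "\<dots> = s + int (Suc i)" using Cons.prems(4)[rule_format, of "Suc i"] i by simp
    finally show "c1 (ys ! i) = (s + 1) + int i" by simp
  qed
  obtain c' where c': "(topple_step m)\<^sup>*\<^sup>* c1 c'" "\<forall>x. x \<notin> set (\<beta> # ys) \<longrightarrow> c' x = c1 x"
    "c' (snd (bub \<beta> ys)) = (s + 1) + int (length ys)"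
    "\<forall>i<length ys. c' (fst (bub \<beta> ys) ! i) = (if i = 0 then (s + 1) - 1 else (s + 1) + int i - 1)"
    using Cons.IH[OF d1 s1 c1b c1ys] by blast
  have bubeq: "bub z (y # ys) = (\<alpha> # fst (bub \<beta> ys), snd (bub \<beta> ys))"
    unfolding \<alpha>_def \<beta>_def by (simp add: split_beta)
  have anot: "\<alpha> \<notin> set (\<beta> # ys)" using Cons.prems(1) ab abset by auto
  show ?case
  proof (intro exI conjI allI impI)
    show "(topple_step m)\<^sup>*\<^sup>* c c'" using step c'(1) by simp
  next
    fix x assume "x \<notin> set (z # y # ys)"
    then have "x \<notin> set (\<beta> # ys)" "x \<noteq> \<alpha>" "x \<noteq> \<beta>" using abset by auto
    then show "c' x = c x" using c'(2) unfolding c1_def by simp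
  next
    show "c' (snd (bub z (y # ys))) = s + int (length (y # ys))" using c'(3) bubeq by simp
  next
    fix i assume i: "i < length (y # ys)"
    show "c' (fst (bub z (y # ys)) ! i) = (if i = 0 then s - 1 else s + int i - 1)"
    proof (cases i)
      case 0
      then show ?thesis using c'(2) anot bubeq ab unfolding c1_def by simp
    next
      case (Suc j)
      then have "j < length ys" using i by simp
      then show ?thesis using c'(4) Suc bubeq by auto
    qed
  qed
qed

definition sitef :: "nat \<Rightarrow> nat \<Rightarrow> nat \<Rightarrow> nat" where
  "sitef h q i = (if i < q then i + 1 else if i < q + h then i else i + 1)"

definition idx :: "nat list \<Rightarrow> nat \<Rightarrow> nat" where
  "idx L x = (THE i. i < length L \<and> L ! i = x)"

lemma idx_nth: "distinct L \<Longrightarrow> i < length L \<Longrightarrow> idx L (L ! i) = i"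
  unfolding idx_def by (rule the_equality) (auto simp: nth_eq_iff_index_eq)

definition cfg :: "nat \<Rightarrow> nat \<Rightarrow> nat list \<Rightarrow> nat \<Rightarrow> int" where
  "cfg h q L x = (if x \<in> set L then int (sitef h q (idx L x)) else undefined)"

definition passL :: "nat \<Rightarrow> nat \<Rightarrow> nat list \<Rightarrow> nat list" where
  "passL h q L = take (q - 1) L @ fst (bub (L ! (q - 1)) (take h (drop q L))) @
     snd (bub (L ! (q - 1)) (take h (drop q L))) # drop (q + h) L"

lemma cfg_nth: "distinct L \<Longrightarrow> i < length L \<Longrightarrow> cfg h q L (L ! i) = int (sitef h q i)"
  unfolding cfg_def by (simp add: idx_nth)

lemma pass_decomp:
  assumes "1 \<le> q" "q + h \<le> length L"
  shows "L = take (q - 1) L @ (L ! (q - 1) # take h (drop q L)) @ drop (q + h) L"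
proof -
  have d: "drop (q - 1) L = L ! (q - 1) # drop q L"
    using assms Cons_nth_drop_Suc[of "q - 1" L] by simp
  have "L = take (q - 1) L @ drop (q - 1) L" by simp
  also have "drop (q - 1) L = take (Suc h) (drop (q - 1) L) @ drop (Suc h) (drop (q - 1) L)"
    by (rule append_take_drop_id[symmetric])
  also have "take (Suc h) (drop (q - 1) L) = L ! (q - 1) # take h (drop q L)" using d by simp
  also have "drop (Suc h) (drop (q - 1) L) = drop (q + h) L" using assms by (simp add: add.commute)
  finally show ?thesis .
qed

lemma passL_mset:
  assumes "1 \<le> q" "q + h \<le> length L"
  shows "mset (passL h q L) = mset L"
proof -
  let ?z = "L ! (q - 1)" and ?ys = "take h (drop q L)"
  have "mset (fst (bub ?z ?ys)) + {#snd (bub ?z ?ys)#} = mset (?z # ?ys)" by (rule bub_mset)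
  then have "mset (passL h q L) = mset (take (q - 1) L @ (?z # ?ys) @ drop (q + h) L)"
    unfolding passL_def by simp
  also have "\<dots> = mset L" using pass_decomp[OF assms] by simp
  finally show ?thesis .
qed

lemma pass:
  assumes q: "1 \<le> q" "q + h \<le> length L" and dL: "distinct L" and sL: "set L \<subseteq> {1..m+1}"
  shows "(topple_step m)\<^sup>*\<^sup>* (cfg h q L) (cfg h (q - 1) (passL h q L))"
proof -
  define z where "z = L ! (q - 1)"
  define ys where "ys = take h (drop q L)"
  define r where "r = fst (bub z ys)"
  define M where "M = snd (bub z ys)"
  define A where "A = take (q - 1) L"
  define B where "B = drop (q + h) L"
  have dec: "L = A @ (z # ys) @ B" unfolding A_def B_def z_def ys_def using pass_decomp[OF q] .
  have lA: "length A = q - 1" unfolding A_def using q by simp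
  have lys: "length ys = h" unfolding ys_def using q by simp
  have lr: "length r = h" unfolding r_def using bub_len lys by simp
  have L': "passL h q L = A @ r @ M # B" unfolding passL_def A_def B_def r_def M_def z_def ys_def by simp
  have dzys: "distinct (z # ys)" using dL dec by (metis distinct_append)
  have szys: "set (z # ys) \<subseteq> {1..m+1}" using sL dec by auto
  let ?c = "cfg h q L"
  have cz: "?c z = int q"
  proof -
    have "?c z = int (sitef h q (q - 1))" unfolding z_def using cfg_nth[OF dL] q by simp
    then show ?thesis using q by (simp add: sitef_def)
  qed
  have cys: "\<forall>i<length ys. ?c (ys ! i) = int q + int i"
  proof (intro allI impI)
    fix i assume i: "i < length ys"
    have "ys ! i = L ! (q + i)" unfolding ys_def using i lys q by (simp add: nth_drop)
    moreover have "q + i < length L" using i lys q by simp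
    ultimately have "?c (ys ! i) = int (sitef h q (q + i))" using cfg_nth[OF dL] by simp
    then show "?c (ys ! i) = int q + int i" using i lys by (simp add: sitef_def)
  qed
  obtain c' where c': "(topple_step m)\<^sup>*\<^sup>* ?c c'" "\<forall>x. x \<notin> set (z # ys) \<longrightarrow> c' x = ?c x"
    "c' M = int q + int (length ys)"
    "\<forall>i<length ys. c' (r ! i) = (if i = 0 then int q - 1 else int q + int i - 1)"
    using wave[OF dzys szys cz cys] unfolding r_def M_def by blast
  have mL': "mset (passL h q L) = mset L" using passL_mset[OF q] .
  then have dL': "distinct (passL h q L)" using dL mset_eq_imp_distinct_iff by blast
  have sL': "set (passL h q L) = set L" using mL' mset_eq_setD by blast
  have lL': "length (passL h q L) = length L" using mL' mset_eq_length by blast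
  have "cfg h (q - 1) (passL h q L) = c'"
  proof
    fix x
    show "cfg h (q - 1) (passL h q L) x = c' x"
    proof (cases "x \<in> set L")
      case False
      then have "x \<notin> set (z # ys)" using dec by auto
      then show ?thesis using False c'(2) sL' unfolding cfg_def by simp
    next
      case True
      then obtain j where j: "j < length L" "x = passL h q L ! j"
        using sL' lL' by (metis in_set_conv_nth)
      have lhs: "cfg h (q - 1) (passL h q L) x = int (sitef h (q - 1) j)"
        using cfg_nth[OF dL'] j lL' by simp
      have lenL: "length L = (q - 1) + Suc h + length B" using dec lA lys by simp
      show ?thesis
      proof -
        consider (a) "j < q - 1" | (b) "q - 1 \<le> j" "j < q - 1 + h" | (c) "j = q - 1 + h" | (d) "q - 1 + h < j"
          by linarith
        then show ?thesis
        proof cases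
          case a
          have xe: "x = A ! j" using j a lA unfolding L' by (simp add: nth_append)
          have "x \<in> set A" using xe a lA by simp
          then have xn: "x \<notin> set (z # ys)" using dL dec by auto
          have "L ! j = A ! j" using dec a lA by (simp add: nth_append)
          then have "?c x = int (sitef h q j)" using cfg_nth[OF dL j(1)] xe by simp
          moreover have "j < q" using a by simp
          ultimately show ?thesis using lhs c'(2) xn a by (simp add: sitef_def)
        next
          case b
          define k where "k = j - (q - 1)"
          have k: "k < h" "j = q - 1 + k" using b unfolding k_def by auto
          have xe: "x = r ! k" using j k lA lr unfolding L' by (simp add: nth_append)
          have "c' x = (if k = 0 then int q - 1 else int q + int k - 1)" using c'(4) xe k lys by simp
          moreover have "sitef h (q - 1) j = j" using k by (simp add: sitef_def)
          ultimately show ?thesis using lhs k q by auto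
        next
          case c
          have xe: "x = M" using j c lA lr unfolding L' by (simp add: nth_append)
          have "\<not> j < q - 1" "\<not> j < q - 1 + h" using c by simp_all
          then have "sitef h (q - 1) j = j + 1" by (simp add: sitef_def)
          then have "sitef h (q - 1) j = q + h" using c q by simp
          then show ?thesis using lhs c'(3) xe lys q by simp
        next
          case d
          define k where "k = j - (q + h)"
          have k: "j = (q - 1) + Suc h + k" using d q unfolding k_def by auto
          have xe: "x = B ! k" using j k lA lr unfolding L' by (simp add: nth_append)
          have kB: "k < length B" using j(1) k lenL by simp
          have "x \<in> set B" using xe kB by simp
          then have xn: "x \<notin> set (z # ys)" using dL dec by auto
          have "L ! j = B ! k" using dec k lA lys by (simp add: nth_append)
          then have "?c x = int (sitef h q j)" using cfg_nth[OF dL j(1)] xe by simp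
          moreover have "\<not> j < q" "\<not> j < q + h" "\<not> j < q - 1" "\<not> j < q - 1 + h" using d q by auto
          ultimately show ?thesis using lhs c'(2) xn by (simp add: sitef_def)
        qed
      qed
    qed
  qed
  then show ?thesis using c'(1) by simp
qed


section \<open>Abstract confluence from a diamond property on an invariant\<close>

context
  fixes I :: "'a \<Rightarrow> bool" and R :: "'a \<Rightarrow> 'a \<Rightarrow> bool"
  assumes dia: "\<And>x y z. I x \<Longrightarrow> R x y \<Longrightarrow> R x z \<Longrightarrow> y = z \<or> (\<exists>u. R y u \<and> R z u)"
    and inv: "\<And>x y. I x \<Longrightarrow> R x y \<Longrightarrow> I y"
begin

lemma strip_lemma:
  assumes "I x" "R\<^sup>*\<^sup>* x y" "R x z"
  shows "\<exists>u. R\<^sup>=\<^sup>= y u \<and> R\<^sup>*\<^sup>* z u"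
  using assms(2) assms(1,3)
proof (induction rule: rtranclp_induct)
  case base
  then show ?case by blast
next
  case (step b c)
  have Ib: "I b" using step.hyps(1) step.prems(1)
    by (induction rule: rtranclp_induct) (auto intro: inv)
  obtain e where e: "R\<^sup>=\<^sup>= b e" "R\<^sup>*\<^sup>* z e" using step.IH step.prems by blast
  show ?case
  proof (cases "b = e")
    case True
    then have "R\<^sup>*\<^sup>* z c" using e(2) step.hyps(2) by simp
    then show ?thesis by blast
  next
    case False
    then have "R b e" using e(1) by simp
    from dia[OF Ib step.hyps(2) this] show ?thesis
    proof
      assume "c = e" then show ?thesis using e(2) by blast
    next
      assume "\<exists>u. R c u \<and> R e u"
      then obtain u where "R c u" "R e u" by blast
      then show ?thesis using e(2) by (meson rtranclp.rtrancl_into_rtrancl sup2CI)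
    qed
  qed
qed

lemma confluence:
  assumes "I x" "R\<^sup>*\<^sup>* x z" "R\<^sup>*\<^sup>* x y"
  shows "\<exists>u. R\<^sup>*\<^sup>* y u \<and> R\<^sup>*\<^sup>* z u"
  using assms(2) assms(1,3)
proof (induction rule: rtranclp_induct)
  case base
  then show ?case by blast
next
  case (step b c)
  obtain e where e: "R\<^sup>*\<^sup>* y e" "R\<^sup>*\<^sup>* b e" using step.IH step.prems by blast
  have Ib: "I b" using step.hyps(1) step.prems(1)
    by (induction rule: rtranclp_induct) (auto intro: inv)
  obtain u where u: "R\<^sup>=\<^sup>= e u" "R\<^sup>*\<^sup>* c u"
    using strip_lemma[OF Ib e(2) step.hyps(2)] by blast
  have "R\<^sup>*\<^sup>* e u" using u(1) by auto
  then show ?case using e(1) u(2) by (meson rtranclp_trans)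
qed

lemma unique_nf:
  assumes "I x" "R\<^sup>*\<^sup>* x y" "R\<^sup>*\<^sup>* x z" "\<And>u. \<not> R y u" "\<And>u. \<not> R z u"
  shows "y = z"
proof -
  obtain u where u: "R\<^sup>*\<^sup>* y u" "R\<^sup>*\<^sup>* z u" using confluence[OF assms(1,3,2)] by blast
  have "y = u" using u(1) assms(4) by (induction rule: converse_rtranclp_induct) auto
  moreover have "z = u" using u(2) assms(5) by (induction rule: converse_rtranclp_induct) auto
  ultimately show ?thesis by simp
qed

end

section \<open>Occupancy invariant\<close>

definition occ :: "nat \<Rightarrow> (nat \<Rightarrow> int) \<Rightarrow> int \<Rightarrow> nat" where
  "occ m c s = card {k\<in>{1..m+1}. c k = s}"

definition fval :: "nat \<Rightarrow> nat \<Rightarrow> (int \<Rightarrow> int) \<Rightarrow> int \<Rightarrow> int" where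
  "fval m p d s = (if s = 0 then d 1 else if s = int m + 1 then - d (int m + 1)
     else if 1 \<le> s \<and> s \<le> int m then (if s = int p then 2 else 1) - d s + d (s + 1) else 0)"

definition Inv :: "nat \<Rightarrow> nat \<Rightarrow> (nat \<Rightarrow> int) \<Rightarrow> bool" where
  "Inv m p c \<longleftrightarrow> (\<exists>d. (\<forall>i. 1 \<le> i \<and> i \<le> int p \<longrightarrow> d i = 0 \<or> d i = 1) \<and>
      (\<forall>i. int p < i \<and> i \<le> int m + 1 \<longrightarrow> d i = 0 \<or> d i = -1) \<and>
      (\<forall>s. int (occ m c s) = fval m p d s))"

lemma fval_le2:
  assumes "1 \<le> p" "p \<le> m"
    and d1: "\<forall>i. 1 \<le> i \<and> i \<le> int p \<longrightarrow> d i = 0 \<or> d i = 1"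
    and d2: "\<forall>i. int p < i \<and> i \<le> int m + 1 \<longrightarrow> d i = 0 \<or> d i = -1"
  shows "fval m p d s \<le> 2"
proof -
  consider (z) "s = 0" | (t) "s = int m + 1" | (a) "1 \<le> s" "s < int p"
    | (b) "s = int p" | (c) "int p < s" "s \<le> int m" | (o) "s < 0 \<or> s > int m + 1"
    using assms(1,2) by linarith
  then show ?thesis
  proof cases
    case z then show ?thesis using d1[rule_format, of 1] assms(1) by (auto simp: fval_def)
  next
    case t then show ?thesis using d2[rule_format, of "int m + 1"] assms(2) by (auto simp: fval_def)
  next
    case a
    have x: "d s = 0 \<or> d s = 1" "d (s+1) = 0 \<or> d (s+1) = 1"
      using a d1[rule_format, of s] d1[rule_format, of "s+1"] by auto
    have e: "fval m p d s = 1 - d s + d (s+1)" using a assms by (simp add: fval_def)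
    have "0 \<le> d s" "d (s+1) \<le> 1" using x by auto
    then show ?thesis using e by linarith
  next
    case b
    have x: "d s = 0 \<or> d s = 1" "d (s+1) = 0 \<or> d (s+1) = -1"
      using b d1[rule_format, of s] d2[rule_format, of "s+1"] assms by auto
    have e: "fval m p d s = 2 - d s + d (s+1)" using b assms by (simp add: fval_def)
    have "0 \<le> d s" "d (s+1) \<le> 0" using x by auto
    then show ?thesis using e by linarith
  next
    case c
    have x: "d s = 0 \<or> d s = -1" "d (s+1) = 0 \<or> d (s+1) = -1"
      using c d2[rule_format, of s] d2[rule_format, of "s+1"] by auto
    have e: "fval m p d s = 1 - d s + d (s+1)" using c assms by (simp add: fval_def)
    have "-1 \<le> d s" "d (s+1) \<le> 0" using x by auto
    then show ?thesis using e by linarith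
  next
    case o then show ?thesis by (auto simp: fval_def)
  qed
qed


lemma Inv_occ_le2: "1 \<le> p \<Longrightarrow> p \<le> m \<Longrightarrow> Inv m p c \<Longrightarrow> occ m c s \<le> 2"
  unfolding Inv_def using fval_le2 by (metis of_nat_le_iff of_nat_numeral)

lemma fval_shift:
  assumes "1 \<le> i" "i \<le> int m"
  shows "fval m p (d(i := d i + 1, i + 1 := d (i + 1) - 1)) s =
    fval m p d s + (if s = i - 1 then 1 else 0) + (if s = i + 1 then 1 else 0) - (if s = i then 2 else 0)"
  using assms by (cases "s = 0"; cases "i = int m") (auto simp: fval_def)

lemma occ_step:
  assumes "c \<alpha> = i" "c \<beta> = i" "\<alpha> \<noteq> \<beta>" "\<alpha> \<in> {1..m+1}" "\<beta> \<in> {1..m+1}"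
  shows "int (occ m (c(\<alpha> := c \<alpha> - 1, \<beta> := c \<beta> + 1)) s) =
    int (occ m c s) + (if s = i - 1 then 1 else 0) + (if s = i + 1 then 1 else 0) - (if s = i then 2 else 0)"
proof -
  let ?c' = "c(\<alpha> := c \<alpha> - 1, \<beta> := c \<beta> + 1)"
  let ?K = "\<lambda>c s. {k\<in>{1..m+1}. c k = s}"
  have fin: "finite (?K c s)" by simp
  consider (ca) "s = i - 1" | (cb) "s = i + 1" | (cc) "s = i" | (cd) "s \<noteq> i - 1" "s \<noteq> i + 1" "s \<noteq> i" by blast
  then show ?thesis
  proof cases
    case ca
    have "?K ?c' s = insert \<alpha> (?K c s)" using ca assms by auto
    moreover have "\<alpha> \<notin> ?K c s" using ca assms by auto
    ultimately show ?thesis using ca fin unfolding occ_def by simp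
  next
    case cb
    have "?K ?c' s = insert \<beta> (?K c s)" using cb assms by auto
    moreover have "\<beta> \<notin> ?K c s" using cb assms by auto
    ultimately show ?thesis using cb fin unfolding occ_def by simp
  next
    case cc
    have eq: "?K ?c' s = ?K c s - {\<alpha>, \<beta>}" using cc assms by auto
    have sub: "{\<alpha>, \<beta>} \<subseteq> ?K c s" using cc assms(1,2,4,5) by simp
    have "card (?K c s - {\<alpha>, \<beta>}) = card (?K c s) - card {\<alpha>, \<beta>}"
      by (rule card_Diff_subset[OF _ sub]) simp
    moreover have "card {\<alpha>, \<beta>} = 2" using assms(3) by simp
    moreover have "card {\<alpha>, \<beta>} \<le> card (?K c s)"
      using sub fin by (rule card_mono[rotated])
    ultimately have "int (card (?K ?c' s)) = int (card (?K c s)) - 2" unfolding eq by simp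
    then show ?thesis using cc unfolding occ_def by simp
  next
    case cd
    have "?K ?c' s = ?K c s" using cd assms by auto
    then show ?thesis using cd unfolding occ_def by simp
  qed
qed


lemma Inv_step:
  assumes p: "1 \<le> p" "p \<le> m" and I: "Inv m p c" and st: "topple_step m c c'"
  shows "Inv m p c'"
proof -
  obtain \<alpha> \<beta> where ab: "1 \<le> \<alpha>" "\<alpha> < \<beta>" "\<beta> \<le> m + 1" "c \<alpha> = c \<beta>"
    "c' = c(\<alpha> := c \<alpha> - 1, \<beta> := c \<beta> + 1)"
    using st unfolding topple_step_def by blast
  define i where "i = c \<alpha>"
  obtain d where d1: "\<forall>j. 1 \<le> j \<and> j \<le> int p \<longrightarrow> d j = 0 \<or> d j = 1"
    and d2: "\<forall>j. int p < j \<and> j \<le> int m + 1 \<longrightarrow> d j = 0 \<or> d j = -1"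
    and docc: "\<forall>s. int (occ m c s) = fval m p d s"
    using I unfolding Inv_def by blast
  have "{\<alpha>, \<beta>} \<subseteq> {k\<in>{1..m+1}. c k = i}" using ab unfolding i_def by auto
  then have "card {\<alpha>, \<beta>} \<le> occ m c i" unfolding occ_def by (rule card_mono[rotated]) simp
  then have "2 \<le> occ m c i" using ab(2) by simp
  then have "(2::int) \<le> int (occ m c i)" by simp
  then have f2: "2 \<le> fval m p d i" using docc by simp
  have i1: "1 \<le> i" "i \<le> int m"
  proof -
    have "\<not> (i = 0)"
    proof
      assume "i = 0"
      then have "fval m p d i = d 1" by (simp add: fval_def)
      moreover have "d 1 = 0 \<or> d 1 = 1" using d1 p by simp
      ultimately show False using f2 by auto
    qed
    moreover have "\<not> (i = int m + 1)"
    proof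
      assume "i = int m + 1"
      then have "fval m p d i = - d (int m + 1)" by (simp add: fval_def)
      moreover have "d (int m + 1) = 0 \<or> d (int m + 1) = -1" using d2 p by simp
      ultimately show False using f2 by auto
    qed
    moreover have "\<not> (i < 0 \<or> i > int m + 1)"
    proof
      assume "i < 0 \<or> i > int m + 1"
      then have "fval m p d i = 0" by (auto simp: fval_def)
      then show False using f2 by simp
    qed
    ultimately show "1 \<le> i" "i \<le> int m" by auto
  qed
  have ci: "c \<alpha> = i" "c \<beta> = i" "\<alpha> \<noteq> \<beta>" "\<alpha> \<in> {1..m+1}" "\<beta> \<in> {1..m+1}"
    using ab unfolding i_def by auto
  define d' where "d' = d(i := d i + 1, i + 1 := d (i + 1) - 1)"
  have vals: "(i < int p \<and> d i = 0 \<and> d (i+1) = 1) \<or> (i = int p \<and> d i = 0 \<and> d (i+1) = 0) \<or>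
              (int p < i \<and> d i = -1 \<and> d (i+1) = 0)"
  proof -
    consider (lt) "i < int p" | (eq) "i = int p" | (gt) "int p < i" by linarith
    then show ?thesis
    proof cases
      case lt
      have x: "d i = 0 \<or> d i = 1" "d (i+1) = 0 \<or> d (i+1) = 1"
        using lt i1 d1[rule_format, of i] d1[rule_format, of "i+1"] by auto
      have e: "fval m p d i = 1 - d i + d (i+1)" using lt i1 by (simp add: fval_def)
      show ?thesis using x e f2 lt by auto
    next
      case eq
      have x: "d i = 0 \<or> d i = 1" "d (i+1) = 0 \<or> d (i+1) = -1"
        using eq i1 p d1[rule_format, of i] d2[rule_format, of "i+1"] by auto
      have e: "fval m p d i = 2 - d i + d (i+1)" using eq i1 by (simp add: fval_def)
      show ?thesis using x e f2 eq by auto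
    next
      case gt
      have x: "d i = 0 \<or> d i = -1" "d (i+1) = 0 \<or> d (i+1) = -1"
        using gt i1 d2[rule_format, of i] d2[rule_format, of "i+1"] by auto
      have e: "fval m p d i = 1 - d i + d (i+1)" using gt i1 by (simp add: fval_def)
      show ?thesis using x e f2 gt by auto
    qed
  qed
  have d1': "\<forall>j. 1 \<le> j \<and> j \<le> int p \<longrightarrow> d' j = 0 \<or> d' j = 1"
    using d1 vals unfolding d'_def by auto
  have d2': "\<forall>j. int p < j \<and> j \<le> int m + 1 \<longrightarrow> d' j = 0 \<or> d' j = -1"
    using d2 vals unfolding d'_def by auto
  have occ': "\<forall>s. int (occ m c' s) = fval m p d' s"
  proof
    fix s
    have "int (occ m c' s) = int (occ m c s) + (if s = i - 1 then 1 else 0) + (if s = i + 1 then 1 else 0)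
        - (if s = i then 2 else 0)"
      unfolding ab(5) by (rule occ_step[OF ci])
    also have "\<dots> = fval m p d' s" unfolding d'_def using fval_shift[OF i1] docc by simp
    finally show "int (occ m c' s) = fval m p d' s" .
  qed
  show ?thesis unfolding Inv_def using d1' d2' occ' by blast
qed


lemma Inv_init:
  assumes p: "1 \<le> p" "p \<le> m" and c: "c \<in> confS m p"
  shows "Inv m p c"
proof -
  have rng: "\<forall>k\<in>{1..m+1}. c k \<in> {1..int m}"
    and one: "\<forall>i\<in>{1..int m} - {int p}. card {k\<in>{1..m+1}. c k = i} = 1"
    and two: "card {k\<in>{1..m+1}. c k = int p} = 2"
    using c unfolding confS_def by auto
  have "\<forall>s. int (occ m c s) = fval m p (\<lambda>_. 0) s"
  proof
    fix s
    show "int (occ m c s) = fval m p (\<lambda>_. 0) s"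
    proof (cases "1 \<le> s \<and> s \<le> int m")
      case True
      show ?thesis
      proof (cases "s = int p")
        case True
        then show ?thesis using two p unfolding occ_def fval_def by simp
      next
        case False
        then have "card {k\<in>{1..m+1}. c k = s} = 1" using one \<open>1 \<le> s \<and> s \<le> int m\<close> by simp
        then show ?thesis using False True unfolding occ_def fval_def by simp
      qed
    next
      case False
      then have "{k\<in>{1..m+1}. c k = s} = {}" using rng by fastforce
      then show ?thesis using False unfolding occ_def fval_def by auto
    qed
  qed
  then show ?thesis unfolding Inv_def by auto
qed

lemma diamond:
  assumes p: "1 \<le> p" "p \<le> m" and I: "Inv m p c"
    and s1: "topple_step m c c1" and s2: "topple_step m c c2"
  shows "c1 = c2 \<or> (\<exists>u. topple_step m c1 u \<and> topple_step m c2 u)"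
proof -
  obtain \<alpha> \<beta> where ab: "1 \<le> \<alpha>" "\<alpha> < \<beta>" "\<beta> \<le> m + 1" "c \<alpha> = c \<beta>"
    "c1 = c(\<alpha> := c \<alpha> - 1, \<beta> := c \<beta> + 1)"
    using s1 unfolding topple_step_def by blast
  obtain \<gamma> \<delta> where gd: "1 \<le> \<gamma>" "\<gamma> < \<delta>" "\<delta> \<le> m + 1" "c \<gamma> = c \<delta>"
    "c2 = c(\<gamma> := c \<gamma> - 1, \<delta> := c \<delta> + 1)"
    using s2 unfolding topple_step_def by blast
  show ?thesis
  proof (cases "c \<alpha> = c \<gamma>")
    case True
    let ?K = "{k\<in>{1..m+1}. c k = c \<alpha>}"
    have le2: "card ?K \<le> 2" using Inv_occ_le2[OF p I] unfolding occ_def by blast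
    have sub: "{\<alpha>, \<beta>, \<gamma>, \<delta>} \<subseteq> ?K" using ab gd True by auto
    have "\<gamma> = \<alpha> \<and> \<delta> = \<beta>"
    proof (rule ccontr)
      assume ne: "\<not> (\<gamma> = \<alpha> \<and> \<delta> = \<beta>)"
      have "card {\<alpha>, \<beta>, \<gamma>, \<delta>} \<le> card ?K" using sub by (rule card_mono[rotated]) simp
      moreover have "3 \<le> card {\<alpha>, \<beta>, \<gamma>, \<delta>}"
      proof -
        have "\<gamma> \<notin> {\<alpha>, \<beta>} \<or> \<delta> \<notin> {\<alpha>, \<beta>}" using ne ab(2) gd(2) by auto
        then obtain e where e: "e \<in> {\<gamma>, \<delta>}" "e \<notin> {\<alpha>, \<beta>}" by blast
        have "card {\<alpha>, \<beta>, e} = 3" using e ab(2) by auto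
        moreover have "card {\<alpha>, \<beta>, e} \<le> card {\<alpha>, \<beta>, \<gamma>, \<delta>}"
          using e by (intro card_mono) auto
        ultimately show ?thesis by simp
      qed
      ultimately show False using le2 by simp
    qed
    then show ?thesis using ab(5) gd(5) by simp
  next
    case False
    have dis: "\<gamma> \<noteq> \<alpha>" "\<gamma> \<noteq> \<beta>" "\<delta> \<noteq> \<alpha>" "\<delta> \<noteq> \<beta>" using False ab(4) gd(4) by auto
    define u where "u = c(\<alpha> := c \<alpha> - 1, \<beta> := c \<beta> + 1, \<gamma> := c \<gamma> - 1, \<delta> := c \<delta> + 1)"
    have c1g: "c1 \<gamma> = c \<gamma>" "c1 \<delta> = c \<delta>" using dis ab(5) by auto
    have u1: "u = c1(\<gamma> := c1 \<gamma> - 1, \<delta> := c1 \<delta> + 1)"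
      unfolding u_def ab(5) using dis by (auto simp: fun_eq_iff)
    have c2a: "c2 \<alpha> = c \<alpha>" "c2 \<beta> = c \<beta>" using dis gd(5) by auto
    have u2: "u = c2(\<alpha> := c2 \<alpha> - 1, \<beta> := c2 \<beta> + 1)"
      unfolding u_def gd(5) using dis ab(2) by (auto simp: fun_eq_iff)
    have "topple_step m c1 u"
      unfolding topple_step_def
      apply (rule exI[of _ \<gamma>], rule exI[of _ \<delta>])
      using gd(1-4) c1g u1 by simp
    moreover have "topple_step m c2 u"
      unfolding topple_step_def
      apply (rule exI[of _ \<alpha>], rule exI[of _ \<beta>])
      using ab(1-4) c2a u2 by simp
    ultimately show ?thesis by blast
  qed
qed

lemma stable_no_step:
  assumes "stable_conf m c" shows "\<not> topple_step m c u"
proof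
  assume "topple_step m c u"
  then obtain \<alpha> \<beta> where ab: "1 \<le> \<alpha>" "\<alpha> < \<beta>" "\<beta> \<le> m + 1" "c \<alpha> = c \<beta>"
    unfolding topple_step_def by blast
  have "\<alpha> \<in> {1..m+1}" "\<beta> \<in> {1..m+1}" using ab by auto
  then have "\<alpha> = \<beta>" using assms ab(4) unfolding stable_conf_def inj_on_def by blast
  then show False using ab(2) by simp
qed

lemma topple_unique:
  assumes p: "1 \<le> p" "p \<le> m" and c: "c \<in> confS m p"
    and "(topple_step m)\<^sup>*\<^sup>* c c1" "stable_conf m c1" "(topple_step m)\<^sup>*\<^sup>* c c2" "stable_conf m c2"
  shows "c1 = c2"
proof (rule unique_nf[where I = "Inv m p" and R = "topple_step m"])
  show "\<And>x y z. Inv m p x \<Longrightarrow> topple_step m x y \<Longrightarrow> topple_step m x z \<Longrightarrow> y = z \<or> (\<exists>u. topple_step m y u \<and> topple_step m z u)"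
    using diamond[OF p] by blast
  show "\<And>x y. Inv m p x \<Longrightarrow> topple_step m x y \<Longrightarrow> Inv m p y" using Inv_step[OF p] by blast
  show "Inv m p c" using Inv_init[OF p c] .
qed (use assms stable_no_step in auto)


definition out :: "nat \<Rightarrow> nat list \<Rightarrow> nat list" where
  "out p w = fst (run (take p w) (drop p w)) @ snd (run (take p w) (drop p w))"

definition st :: "nat \<Rightarrow> nat list \<Rightarrow> nat \<Rightarrow> nat list" where
  "st p w q = take q (take p w) @ fst (run (drop q (take p w)) (drop p w)) @ snd (run (drop q (take p w)) (drop p w))"

lemma st_mset: "q \<le> p \<Longrightarrow> p \<le> length w \<Longrightarrow> mset (st p w q) = mset w"
proof -
  assume a: "q \<le> p" "p \<le> length w"
  have "mset (st p w q) = mset (take q (take p w)) + (mset (drop q (take p w)) + mset (drop p w))"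
    unfolding st_def using run_mset[of "drop q (take p w)" "drop p w"] by (simp add: add.assoc)
  also have "\<dots> = mset (take p w) + mset (drop p w)"
    by (metis append_take_drop_id mset_append union_assoc)
  also have "\<dots> = mset w" by (metis append_take_drop_id mset_append)
  finally show ?thesis .
qed

lemma st_len: "q \<le> p \<Longrightarrow> p \<le> length w \<Longrightarrow> length (st p w q) = length w"
  using st_mset mset_eq_length by blast

lemma st_p: "p \<le> length w \<Longrightarrow> st p w p = w"
  unfolding st_def by simp

lemma st_0: "st p w 0 = out p w"
  unfolding st_def out_def by simp

lemma passL_st:
  assumes q: "1 \<le> q" "q \<le> p" and lw: "length w = p + h"
  shows "passL h q (st p w q) = st p w (q - 1)"
proof -
  define xs where "xs = take p w"
  define S0 where "S0 = drop p w"
  define S where "S = fst (run (drop q xs) S0)"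
  define T where "T = snd (run (drop q xs) S0)"
  have lxs: "length xs = p" unfolding xs_def using lw by simp
  have lS: "length S = h" unfolding S_def S0_def using run_len1 lw by simp
  have L: "st p w q = take q xs @ S @ T" unfolding st_def xs_def S0_def S_def T_def by simp
  have ltq: "length (take q xs) = q" using lxs q by simp
  have e1: "st p w q ! (q - 1) = xs ! (q - 1)" unfolding L using ltq q by (simp add: nth_append)
  have e2: "take h (drop q (st p w q)) = S" unfolding L using ltq lS by simp
  have e3: "drop (q + h) (st p w q) = T" unfolding L using ltq lS by simp
  have e4: "take (q - 1) (st p w q) = take (q - 1) xs" unfolding L using ltq q by simp
  have dq: "drop (q - 1) xs = xs ! (q - 1) # drop q xs"
    using Cons_nth_drop_Suc[of "q - 1" xs] q lxs by simp
  have "st p w (q - 1) = take (q - 1) xs @ fst (run (drop (q - 1) xs) S0) @ snd (run (drop (q - 1) xs) S0)"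
    unfolding st_def xs_def S0_def by simp
  also have "\<dots> = take (q - 1) xs @ fst (bub (xs ! (q - 1)) S) @ snd (bub (xs ! (q - 1)) S) # T"
    unfolding dq S_def T_def by (simp add: split_beta)
  finally show ?thesis unfolding passL_def e1 e2 e3 e4 by simp
qed

lemma run_all:
  assumes lw: "length w = p + h" and dw: "distinct w" and sw: "set w \<subseteq> {1..m+1}"
  shows "(topple_step m)\<^sup>*\<^sup>* (cfg h p w) (cfg h 0 (out p w))"
proof -
  have "\<forall>k\<le>p. (topple_step m)\<^sup>*\<^sup>* (cfg h p w) (cfg h (p - k) (st p w (p - k)))"
  proof (intro allI impI)
    fix k assume "k \<le> p"
    then show "(topple_step m)\<^sup>*\<^sup>* (cfg h p w) (cfg h (p - k) (st p w (p - k)))"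
    proof (induction k)
      case 0
      then show ?case using st_p[of p w] lw by simp
    next
      case (Suc k)
      define q where "q = p - k"
      have q: "1 \<le> q" "q \<le> p" using Suc.prems unfolding q_def by auto
      have IH: "(topple_step m)\<^sup>*\<^sup>* (cfg h p w) (cfg h q (st p w q))"
        using Suc.IH Suc.prems unfolding q_def by simp
      have ms: "mset (st p w q) = mset w" using st_mset q lw by simp
      have "(topple_step m)\<^sup>*\<^sup>* (cfg h q (st p w q)) (cfg h (q - 1) (passL h q (st p w q)))"
      proof (rule pass)
        show "1 \<le> q" by fact
        show "q + h \<le> length (st p w q)" using st_len[of q p w] q lw by simp
        show "distinct (st p w q)" using ms dw mset_eq_imp_distinct_iff by blast
        show "set (st p w q) \<subseteq> {1..m+1}" using ms sw mset_eq_setD by blast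
      qed
      then have "(topple_step m)\<^sup>*\<^sup>* (cfg h q (st p w q)) (cfg h (q - 1) (st p w (q - 1)))"
        using passL_st[OF q lw] by simp
      moreover have "q - 1 = p - Suc k" unfolding q_def by simp
      ultimately show ?case using IH by simp
    qed
  qed
  then show ?thesis using st_0[of p w] by (metis diff_self_eq_0 le_refl)
qed

lemma sitef0_mono: "i < j \<Longrightarrow> sitef h 0 i < sitef h 0 j"
  unfolding sitef_def by auto

lemma final_stable:
  assumes "distinct L" "set L = {1..m+1}"
  shows "stable_conf m (cfg h 0 L)"
  unfolding stable_conf_def
proof (rule inj_onI)
  fix x y assume x: "x \<in> {1..m+1}" and y: "y \<in> {1..m+1}" and e: "cfg h 0 L x = cfg h 0 L y"
  obtain i where i: "i < length L" "x = L ! i" using x assms(2) by (metis in_set_conv_nth)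
  obtain j where j: "j < length L" "y = L ! j" using y assms(2) by (metis in_set_conv_nth)
  have "sitef h 0 i = sitef h 0 j" using e i j cfg_nth[OF assms(1)] by simp
  then have "i = j" using sitef0_mono by (metis linorder_neqE_nat less_irrefl)
  then show "x = y" using i j by simp
qed

lemma final_reading:
  assumes "distinct L" "set L = {1..m+1}"
  shows "reading m (cfg h 0 L) L"
  unfolding reading_def
proof (intro conjI)
  show "sorted_wrt (\<lambda>a b. cfg h 0 L a < cfg h 0 L b) L"
    unfolding sorted_wrt_iff_nth_less
    using cfg_nth[OF assms(1)] sitef0_mono by simp
qed (use assms in auto)

lemma reading_unique:
  assumes "reading m c \<pi>" "reading m c \<pi>'"
  shows "\<pi> = \<pi>'"
proof -
  have s1: "sorted_wrt (<) (map c \<pi>)" using assms(1) unfolding reading_def by (simp add: sorted_wrt_map)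
  have s2: "sorted_wrt (<) (map c \<pi>')" using assms(2) unfolding reading_def by (simp add: sorted_wrt_map)
  have st: "set \<pi> = set \<pi>'" using assms unfolding reading_def by simp
  have "map c \<pi> = map c \<pi>'"
    using s1 s2 st by (intro sorted_distinct_set_unique) (auto simp: strict_sorted_iff)
  moreover have "inj_on c (set \<pi> \<union> set \<pi>')"
    using s1 st by (auto simp: strict_sorted_iff distinct_map)
  ultimately show ?thesis using inj_on_map_eq_map by blast
qed


lemma sitef_p: "i < p + h \<Longrightarrow> sitef h p i = (if i < p then i + 1 else i)"
  unfolding sitef_def by auto

lemma sitef_eq:
  assumes "1 \<le> p" "i < p + h" "j < p + h" "sitef h p i = sitef h p j" "i \<noteq> j"
  shows "(i = p - 1 \<and> j = p) \<or> (i = p \<and> j = p - 1)"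
  using assms unfolding sitef_def by (auto split: if_splits)

lemma sitef_set:
  assumes p: "1 \<le> p" "p \<le> m" and h: "h = m + 1 - p" and s: "1 \<le> s" "s \<le> int m"
  shows "{i. i < m + 1 \<and> int (sitef h p i) = s} = (if s = int p then {p - 1, p} else if s < int p then {nat s - 1} else {nat s})"
  using assms unfolding sitef_def by (auto split: if_splits)

lemma card_cfg:
  assumes dw: "distinct w" and lw: "length w = m + 1" and sw: "set w = {1..m+1}"
  shows "card {k\<in>{1..m+1}. cfg h q w k = s} = card {i. i < m + 1 \<and> int (sitef h q i) = s}"
proof -
  have "{k\<in>{1..m+1}. cfg h q w k = s} = (\<lambda>i. w ! i) ` {i. i < m + 1 \<and> int (sitef h q i) = s}"
  proof
    show "{k \<in> {1..m + 1}. cfg h q w k = s} \<subseteq> (\<lambda>i. w ! i) ` {i. i < m + 1 \<and> int (sitef h q i) = s}"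
    proof
      fix k assume k: "k \<in> {k \<in> {1..m + 1}. cfg h q w k = s}"
      then obtain i where i: "i < length w" "k = w ! i" using sw by (metis (no_types, lifting) in_set_conv_nth mem_Collect_eq)
      then show "k \<in> (\<lambda>i. w ! i) ` {i. i < m + 1 \<and> int (sitef h q i) = s}"
        using k cfg_nth[OF dw] lw by auto
    qed
  next
    show "(\<lambda>i. w ! i) ` {i. i < m + 1 \<and> int (sitef h q i) = s} \<subseteq> {k \<in> {1..m + 1}. cfg h q w k = s}"
      using cfg_nth[OF dw] lw sw nth_mem by fastforce
  qed
  moreover have "inj_on (\<lambda>i. w ! i) {i. i < m + 1 \<and> int (sitef h q i) = s}"
    using dw lw by (auto simp: inj_on_def nth_eq_iff_index_eq)
  ultimately show ?thesis by (simp add: card_image)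
qed

lemma cfg_confS:
  assumes p: "1 \<le> p" "p \<le> m" and h: "h = m + 1 - p"
    and dw: "distinct w" and sw: "set w = {1..m+1}"
  shows "cfg h p w \<in> confS m p"
proof -
  have lw: "length w = m + 1" using dw sw distinct_card by fastforce
  have ext: "cfg h p w \<in> {1..m+1} \<rightarrow>\<^sub>E (UNIV :: int set)"
    by (rule PiE_I) (auto simp: cfg_def sw)
  have rng: "\<forall>k\<in>{1..m+1}. cfg h p w k \<in> {1..int m}"
  proof
    fix k assume "k \<in> {1..m+1}"
    then obtain i where i: "i < length w" "k = w ! i" using sw by (metis in_set_conv_nth)
    have "cfg h p w k = int (sitef h p i)" using cfg_nth[OF dw i(1)] i(2) by simp
    moreover have "sitef h p i = (if i < p then i + 1 else i)" using sitef_p[of i p h] i lw h p by simp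
    ultimately show "cfg h p w k \<in> {1..int m}" using i lw p by auto
  qed
  have one: "\<forall>i\<in>{1..int m} - {int p}. card {k\<in>{1..m+1}. cfg h p w k = i} = 1"
  proof
    fix s assume s: "s \<in> {1..int m} - {int p}"
    show "card {k\<in>{1..m+1}. cfg h p w k = s} = 1"
      unfolding card_cfg[OF dw lw sw] using sitef_set[OF p h, of s] s by auto
  qed
  have two: "card {k\<in>{1..m+1}. cfg h p w k = int p} = 2"
    unfolding card_cfg[OF dw lw sw] using sitef_set[OF p h, of "int p"] p by auto
  show ?thesis unfolding confS_def using ext rng one two by blast
qed


lemma cfg_inj:
  assumes p: "1 \<le> p" "p \<le> m" and h: "h = m + 1 - p"
    and dw: "distinct w" "set w = {1..m+1}" "w ! (p - 1) < w ! p"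
    and dw': "distinct w'" "set w' = {1..m+1}" "w' ! (p - 1) < w' ! p"
    and eq: "cfg h p w = cfg h p w'"
  shows "w = w'"
proof -
  have lw: "length w = m + 1" using dw distinct_card by fastforce
  have lw': "length w' = m + 1" using dw' distinct_card by fastforce
  have aux: "\<exists>j<m+1. w' ! j = w ! i \<and> sitef h p j = sitef h p i" if i: "i < m + 1" for i
  proof -
    have "w ! i \<in> set w'" using dw(2) dw'(2) i lw nth_mem by metis
    then obtain j where j: "j < m + 1" "w' ! j = w ! i" using lw' by (metis in_set_conv_nth)
    have "int (sitef h p j) = int (sitef h p i)"
      using cfg_nth[OF dw'(1), of j h p] cfg_nth[OF dw(1), of i h p] eq i j lw lw' by simp
    then show ?thesis using j by auto
  qed
  have ph: "p + h = m + 1" using h p by simp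
  have same: "w ! i = w' ! i" if i: "i < m + 1" "i \<noteq> p - 1" "i \<noteq> p" for i
  proof -
    obtain j where j: "j < m + 1" "w' ! j = w ! i" "sitef h p j = sitef h p i" using aux i(1) by blast
    have "j = i" using sitef_eq[OF p(1), of j h i] j i ph by auto
    then show ?thesis using j by simp
  qed
  have pm: "p < m + 1" "p - 1 < m + 1" using p by auto
  have pair: "w ! (p - 1) \<in> {w' ! (p - 1), w' ! p} \<and> w ! p \<in> {w' ! (p - 1), w' ! p}"
  proof -
    have "w ! i \<in> {w' ! (p - 1), w' ! p}" if i: "i = p - 1 \<or> i = p" for i
    proof -
      obtain j where j: "j < m + 1" "w' ! j = w ! i" "sitef h p j = sitef h p i" using aux i pm by blast
      have "j = i \<or> (j = p - 1 \<and> i = p) \<or> (j = p \<and> i = p - 1)"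
        using sitef_eq[OF p(1), of j h i] j i ph pm by auto
      then show ?thesis using j i by auto
    qed
    then show ?thesis by blast
  qed
  have ne: "w ! (p - 1) \<noteq> w ! p" using dw(3) by simp
  have ne': "w' ! (p - 1) \<noteq> w' ! p" using dw'(3) by simp
  have "w ! (p - 1) = w' ! (p - 1) \<and> w ! p = w' ! p"
    using pair ne ne' dw(3) dw'(3) by auto
  then have "\<forall>i<m+1. w ! i = w' ! i" using same by (metis)
  then show ?thesis using lw lw' by (simp add: nth_equalityI)
qed


lemma cfg_surj:
  assumes p: "1 \<le> p" "p \<le> m" and h: "h = m + 1 - p" and c: "c \<in> confS m p"
  shows "\<exists>w. distinct w \<and> set w = {1..m+1} \<and> w ! (p - 1) < w ! p \<and> cfg h p w = c"
proof -
  have ext: "c \<in> {1..m+1} \<rightarrow>\<^sub>E (UNIV :: int set)"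
    and rng: "\<forall>k\<in>{1..m+1}. c k \<in> {1..int m}"
    and one: "\<forall>i\<in>{1..int m} - {int p}. card {k\<in>{1..m+1}. c k = i} = 1"
    and two: "card {k\<in>{1..m+1}. c k = int p} = 2"
    using c unfolding confS_def by auto
  define K where "K = (\<lambda>s::nat. {k\<in>{1..m+1}. c k = int s})"
  obtain a b where ab: "K p = {a, b}" "a \<noteq> b" using two unfolding K_def by (meson card_2_iff)
  define g where "g = (\<lambda>i. if i < p - 1 then the_elem (K (i + 1)) else if i = p - 1 then min a b
      else if i = p then max a b else the_elem (K i))"
  have ph: "p + h = m + 1" using h p by simp
  have gK: "g i \<in> K (sitef h p i)" if i: "i < m + 1" for i
  proof -
    have single: "the_elem (K s) \<in> K s" if s: "1 \<le> s" "s \<le> m" "s \<noteq> p" for s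
    proof -
      have "card (K s) = 1" using one s unfolding K_def by auto
      then obtain k where "K s = {k}" by (meson card_1_singletonE)
      then show ?thesis by simp
    qed
    consider (a) "i < p - 1" | (b) "i = p - 1" | (c) "i = p" | (d) "p < i" by linarith
    then show ?thesis
    proof cases
      case a
      then have "g i = the_elem (K (i + 1))" "sitef h p i = i + 1" unfolding g_def sitef_def by auto
      then show ?thesis using single[of "i + 1"] a p by auto
    next
      case b
      then have "g i = min a b" "sitef h p i = p" using p unfolding g_def sitef_def by auto
      then show ?thesis using ab by (auto simp: min_def)
    next
      case c
      then have "g i = max a b" "sitef h p i = p" using p ph unfolding g_def sitef_def by auto
      then show ?thesis using ab by (auto simp: max_def)
    next
      case d
      then have "g i = the_elem (K i)" "sitef h p i = i" using i ph unfolding g_def sitef_def by auto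
      then show ?thesis using single[of i] d i p by auto
    qed
  qed
  define w where "w = map g [0..<m+1]"
  have lw: "length w = m + 1" unfolding w_def by simp
  have wn: "w ! i = g i" if "i < m + 1" for i unfolding w_def using that nth_map_upt[of i "m+1" 0 g] by simp
  have cw: "c (w ! i) = int (sitef h p i)" "w ! i \<in> {1..m+1}" if "i < m + 1" for i
    using gK[OF that] wn[OF that] unfolding K_def by auto
  have dw: "distinct w"
    unfolding distinct_conv_nth
  proof (intro allI impI)
    fix i j assume ij: "i < length w" "j < length w" "i \<noteq> j"
    show "w ! i \<noteq> w ! j"
    proof
      assume e: "w ! i = w ! j"
      then have "sitef h p i = sitef h p j" using cw(1)[of i] cw(1)[of j] ij lw by simp
      then have "(i = p - 1 \<and> j = p) \<or> (i = p \<and> j = p - 1)"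
        using sitef_eq[OF p(1), of i h j] ij lw ph by auto
      moreover have "g (p - 1) \<noteq> g p" using ab(2) p unfolding g_def by (auto simp: min_def max_def)
      ultimately show False using e wn ij lw by auto
    qed
  qed
  have sw: "set w = {1..m+1}"
  proof (rule card_subset_eq)
    show "set w \<subseteq> {1..m+1}" using cw(2) lw by (auto simp: in_set_conv_nth)
    show "card (set w) = card {1..m+1}" using distinct_card[OF dw] lw by simp
  qed simp
  have ord: "w ! (p - 1) < w ! p"
    using wn[of "p - 1"] wn[of p] p ab(2) unfolding g_def by (auto simp: min_def max_def)
  have "cfg h p w = c"
  proof
    fix x
    show "cfg h p w x = c x"
    proof (cases "x \<in> {1..m+1}")
      case True
      then obtain i where i: "i < m + 1" "x = w ! i" using sw lw by (metis in_set_conv_nth)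
      then show ?thesis using cfg_nth[OF dw, of i h p] cw(1)[OF i(1)] lw by simp
    next
      case False
      then have "c x = undefined" using ext by (auto simp: PiE_def extensional_def)
      moreover have "x \<notin> set w" using False sw by blast
      ultimately show ?thesis unfolding cfg_def by simp
    qed
  qed
  then show ?thesis using dw sw ord by blast
qed


lemma out_mset: "p \<le> length w \<Longrightarrow> mset (out p w) = mset w"
  using st_mset[of 0 p w] st_0[of p w] by simp

lemma topples_iff:
  assumes p: "1 \<le> p" "p \<le> m" and h: "h = m + 1 - p"
    and dw: "distinct w" and sw: "set w = {1..m+1}"
  shows "topples_to m (cfg h p w) \<pi> \<longleftrightarrow> \<pi> = out p w"
proof -
  have lw: "length w = p + h" using dw sw distinct_card h p by fastforce
  have R: "(topple_step m)\<^sup>*\<^sup>* (cfg h p w) (cfg h 0 (out p w))"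
    using run_all[OF lw dw] sw by simp
  have mo: "mset (out p w) = mset w" using out_mset lw by simp
  have dout: "distinct (out p w)" using mo dw mset_eq_imp_distinct_iff by blast
  have sout: "set (out p w) = {1..m+1}" using mo sw mset_eq_setD by blast
  have stb: "stable_conf m (cfg h 0 (out p w))" using final_stable[OF dout sout] .
  have rd: "reading m (cfg h 0 (out p w)) (out p w)" using final_reading[OF dout sout] .
  have cS: "cfg h p w \<in> confS m p" using cfg_confS[OF p h dw sw] .
  show ?thesis
  proof
    assume "topples_to m (cfg h p w) \<pi>"
    then obtain c' where c': "(topple_step m)\<^sup>*\<^sup>* (cfg h p w) c'" "stable_conf m c'" "reading m c' \<pi>"
      unfolding topples_to_def by blast
    have "c' = cfg h 0 (out p w)" using topple_unique[OF p cS c'(1,2) R stb] .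
    then show "\<pi> = out p w" using reading_unique c'(3) rd by blast
  next
    assume "\<pi> = out p w"
    then show "topples_to m (cfg h p w) \<pi>" unfolding topples_to_def using R stb rd by blast
  qed
qed


definition Wset :: "nat \<Rightarrow> nat \<Rightarrow> nat list set" where
  "Wset m p = {w. distinct w \<and> set w = {1..m+1} \<and> w ! (p - 1) < w ! p}"

definition Full :: "nat \<Rightarrow> nat \<Rightarrow> nat list \<Rightarrow> nat list set" where
  "Full m p \<pi> = {w. distinct w \<and> set w = {1..m+1} \<and> out p w = \<pi>}"

lemma Full_finite: "finite (Full m p \<pi>)"
proof -
  have "Full m p \<pi> \<subseteq> {w. set w \<subseteq> {1..m+1} \<and> length w = m + 1}"
    unfolding Full_def using distinct_card by fastforce
  moreover have "finite {w. set w \<subseteq> {1..m+1} \<and> length w = m + 1}"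
    by (rule finite_lists_length_eq) simp
  ultimately show ?thesis by (rule finite_subset)
qed

lemma count1:
  assumes p: "1 \<le> p" "p \<le> m" and h: "h = m + 1 - p"
  shows "card {c \<in> confS m p. topples_to m c \<pi>} = card {w \<in> Wset m p. out p w = \<pi>}"
proof -
  have img: "cfg h p ` {w \<in> Wset m p. out p w = \<pi>} = {c \<in> confS m p. topples_to m c \<pi>}"
  proof
    show "cfg h p ` {w \<in> Wset m p. out p w = \<pi>} \<subseteq> {c \<in> confS m p. topples_to m c \<pi>}"
      using cfg_confS[OF p h] topples_iff[OF p h] unfolding Wset_def by auto
  next
    show "{c \<in> confS m p. topples_to m c \<pi>} \<subseteq> cfg h p ` {w \<in> Wset m p. out p w = \<pi>}"
    proof
      fix c assume c: "c \<in> {c \<in> confS m p. topples_to m c \<pi>}"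
      then obtain w where w: "distinct w" "set w = {1..m+1}" "w ! (p - 1) < w ! p" "cfg h p w = c"
        using cfg_surj[OF p h] by blast
      have "out p w = \<pi>" using topples_iff[OF p h w(1,2)] c w(4) by auto
      then show "c \<in> cfg h p ` {w \<in> Wset m p. out p w = \<pi>}" using w unfolding Wset_def by blast
    qed
  qed
  have "inj_on (cfg h p) {w \<in> Wset m p. out p w = \<pi>}"
    using cfg_inj[OF p h] unfolding Wset_def inj_on_def by blast
  then show ?thesis using img card_image by fastforce
qed

lemma run_swap: "run (xs @ [x]) (y # ys) = run (xs @ [y]) (x # ys)"
  by (induction xs) (auto simp: split_beta max.commute min.commute)

definition swp :: "nat \<Rightarrow> nat list \<Rightarrow> nat list" where
  "swp p w = take (p - 1) w @ w ! p # w ! (p - 1) # drop (Suc p) w"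

lemma decomp2:
  assumes "1 \<le> p" "p < length w"
  shows "w = take (p - 1) w @ w ! (p - 1) # w ! p # drop (Suc p) w"
proof -
  have "w = take (p - 1) w @ drop (p - 1) w" by simp
  also have "drop (p - 1) w = w ! (p - 1) # drop p w" using assms Cons_nth_drop_Suc[of "p - 1" w] by simp
  also have "drop p w = w ! p # drop (Suc p) w" using assms Cons_nth_drop_Suc[of p w] by simp
  finally show ?thesis .
qed

lemma td:
  assumes "length A = p - 1" "1 \<le> p"
  shows "take p (A @ a # b # B) = A @ [a]" "drop p (A @ a # b # B) = b # B"
    "take (p - 1) (A @ a # b # B) = A" "drop (Suc p) (A @ a # b # B) = B"
    "(A @ a # b # B) ! (p - 1) = a" "(A @ a # b # B) ! p = b"
proof -
  obtain k where k: "p = Suc k" using assms(2) by (cases p) auto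
  then have lA: "length A = k" using assms(1) by simp
  show "take p (A @ a # b # B) = A @ [a]" "drop p (A @ a # b # B) = b # B"
    "take (p - 1) (A @ a # b # B) = A" "drop (Suc p) (A @ a # b # B) = B"
    "(A @ a # b # B) ! (p - 1) = a" "(A @ a # b # B) ! p = b"
    using k lA by (simp_all add: nth_append)
qed

lemma swp_props:
  assumes p: "1 \<le> p" "p < length w"
  shows "mset (swp p w) = mset w" "length (swp p w) = length w" "swp p w ! (p - 1) = w ! p"
    "swp p w ! p = w ! (p - 1)" "swp p (swp p w) = w" "out p (swp p w) = out p w"
proof -
  define A where "A = take (p - 1) w"
  define a where "a = w ! (p - 1)"
  define b where "b = w ! p"
  define B where "B = drop (Suc p) w"
  have lA: "length A = p - 1" unfolding A_def using p by simp
  have d: "w = A @ a # b # B" unfolding A_def a_def b_def B_def using decomp2[OF p] .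
  have sw: "swp p w = A @ b # a # B" unfolding swp_def A_def a_def b_def B_def ..
  show "mset (swp p w) = mset w" unfolding sw by (subst d) simp
  then show "length (swp p w) = length w" using mset_eq_length by blast
  show "swp p w ! (p - 1) = w ! p" unfolding sw b_def[symmetric] using td[OF lA p(1)] by simp
  show "swp p w ! p = w ! (p - 1)" unfolding sw a_def[symmetric] using td[OF lA p(1)] by simp
  show "swp p (swp p w) = w"
    unfolding swp_def[of p "swp p w"] unfolding sw using td[OF lA p(1), of b a B] d by simp
  have t1: "take p w = A @ [a]" "drop p w = b # B" using td[OF lA p(1)] d by (metis)+
  have t2: "take p (swp p w) = A @ [b]" "drop p (swp p w) = a # B" unfolding sw using td[OF lA p(1)] by simp_all
  show "out p (swp p w) = out p w" unfolding out_def t1 t2 run_swap ..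
qed


lemma count2:
  assumes p: "1 \<le> p" "p \<le> m"
  shows "2 * card {w \<in> Wset m p. out p w = \<pi>} = card (Full m p \<pi>)"
proof -
  define A where "A = {w \<in> Full m p \<pi>. w ! (p - 1) < w ! p}"
  define B where "B = {w \<in> Full m p \<pi>. w ! p < w ! (p - 1)}"
  have A': "{w \<in> Wset m p. out p w = \<pi>} = A" unfolding A_def Wset_def Full_def by auto
  have len: "p < length w" if "w \<in> Full m p \<pi>" for w
    using that p distinct_card unfolding Full_def by fastforce
  have U: "Full m p \<pi> = A \<union> B"
  proof -
    have "w ! (p - 1) \<noteq> w ! p" if "w \<in> Full m p \<pi>" for w
      using that len[OF that] p unfolding Full_def by (auto simp: nth_eq_iff_index_eq)
    then show ?thesis unfolding A_def B_def by (auto simp: linorder_neq_iff)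
  qed
  have disj: "A \<inter> B = {}" unfolding A_def B_def by auto
  have fA: "finite A" "finite B" unfolding A_def B_def using Full_finite by auto
  have swpF: "swp p w \<in> Full m p \<pi>" if "w \<in> Full m p \<pi>" for w
  proof -
    have m: "mset (swp p w) = mset w" using swp_props(1)[OF p(1) len[OF that]] .
    have "distinct (swp p w) = distinct w" using mset_eq_imp_distinct_iff[OF m] .
    moreover have "set (swp p w) = set w" using mset_eq_setD[OF m] .
    ultimately show ?thesis using that swp_props(6)[OF p(1) len[OF that]] unfolding Full_def by simp
  qed
  have img: "swp p ` A = B"
  proof
    show "swp p ` A \<subseteq> B"
      using swpF swp_props(3,4)[OF p(1) len] unfolding A_def B_def by auto
  next
    show "B \<subseteq> swp p ` A"
    proof
      fix w assume w: "w \<in> B"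
      then have wF: "w \<in> Full m p \<pi>" unfolding B_def by simp
      have "swp p w \<in> A"
        using swpF[OF wF] swp_props(3,4)[OF p(1) len[OF wF]] w unfolding A_def B_def by auto
      moreover have "swp p (swp p w) = w" using swp_props(5)[OF p(1) len[OF wF]] .
      ultimately show "w \<in> swp p ` A" by (metis image_eqI)
    qed
  qed
  have "inj_on (swp p) A"
  proof (rule inj_onI)
    fix x y assume "x \<in> A" "y \<in> A" "swp p x = swp p y"
    then show "x = y" using swp_props(5)[OF p(1) len] unfolding A_def by (metis (no_types, lifting) mem_Collect_eq)
  qed
  then have "card B = card A" using img card_image by fastforce
  moreover have "card (A \<union> B) = card A + card B" using card_Un_disjoint[OF fA disj] .
  ultimately show ?thesis using A' U by simp
qed

lemma count3:
  assumes p: "1 \<le> p" "p \<le> m" and h: "h = m + 1 - p"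
    and dpi: "distinct \<pi>" and spi: "set \<pi> = {1..m+1}"
  shows "card (Full m p \<pi>) = card (Fset (take h \<pi>) (drop h \<pi>))"
proof -
  have lpi: "length \<pi> = m + 1" using dpi spi distinct_card by fastforce
  let ?f = "\<lambda>w. (take p w, drop p w)"
  have img: "?f ` Full m p \<pi> = Fset (take h \<pi>) (drop h \<pi>)"
  proof
    show "?f ` Full m p \<pi> \<subseteq> Fset (take h \<pi>) (drop h \<pi>)"
    proof
      fix e assume "e \<in> ?f ` Full m p \<pi>"
      then obtain w where w: "w \<in> Full m p \<pi>" "e = ?f w" by blast
      have lw: "length w = m + 1" using w(1) distinct_card unfolding Full_def by fastforce
      have o: "fst (run (take p w) (drop p w)) @ snd (run (take p w) (drop p w)) = \<pi>"
        using w(1) unfolding Full_def out_def by simp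
      have l1: "length (fst (run (take p w) (drop p w))) = h" using run_len1 lw h by simp
      have "take h (fst (run (take p w) (drop p w)) @ snd (run (take p w) (drop p w))) = fst (run (take p w) (drop p w))"
        "drop h (fst (run (take p w) (drop p w)) @ snd (run (take p w) (drop p w))) = snd (run (take p w) (drop p w))"
        using l1 by simp_all
      then have "fst (run (take p w) (drop p w)) = take h \<pi>" "snd (run (take p w) (drop p w)) = drop h \<pi>"
        using o by simp_all
      then have "run (take p w) (drop p w) = (take h \<pi>, drop h \<pi>)" by (simp add: prod_eq_iff)
      then show "e \<in> Fset (take h \<pi>) (drop h \<pi>)" unfolding Fset_def w(2) using lw lpi h p by simp
    qed
  next
    show "Fset (take h \<pi>) (drop h \<pi>) \<subseteq> ?f ` Full m p \<pi>"
    proof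
      fix e assume e: "e \<in> Fset (take h \<pi>) (drop h \<pi>)"
      then obtain xs S where xs: "e = (xs, S)" "length xs = length (drop h \<pi>)" "length S = length (take h \<pi>)"
        "run xs S = (take h \<pi>, drop h \<pi>)" unfolding Fset_def by blast
      have lxs: "length xs = p" using xs(2) lpi h p by simp
      define w where "w = xs @ S"
      have tw: "take p w = xs" "drop p w = S" unfolding w_def using lxs by simp_all
      have "mset w = mset xs + mset S" unfolding w_def by simp
      also have "\<dots> = mset (take h \<pi>) + mset (drop h \<pi>)" using run_mset[of xs S] xs(4) by simp
      also have "\<dots> = mset (take h \<pi> @ drop h \<pi>)" by (simp only: mset_append)
      also have "\<dots> = mset \<pi>" by (simp only: append_take_drop_id)
      finally have mw: "mset w = mset \<pi>" .
      have dw: "distinct w" using mset_eq_imp_distinct_iff[OF mw] dpi by blast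
      have sw: "set w = {1..m+1}" using mset_eq_setD[OF mw] spi by blast
      have ow: "out p w = \<pi>" unfolding out_def tw xs(4) fst_conv snd_conv by (rule append_take_drop_id)
      have "w \<in> Full m p \<pi>" unfolding Full_def using dw sw ow by blast
      moreover have "e = ?f w" by (simp only: xs(1) tw)
      ultimately show "e \<in> ?f ` Full m p \<pi>" by (rule rev_image_eqI)
    qed
  qed
  have "inj_on ?f (Full m p \<pi>)"
  proof (rule inj_onI)
    fix x y assume "?f x = ?f y"
    then have "take p x = take p y" "drop p x = drop p y" by auto
    then have "take p x @ drop p x = take p y @ drop p y" by (simp only:)
    then show "x = y" by (simp only: append_take_drop_id)
  qed
  then show ?thesis using img card_image by fastforce
qed


lemma ltr_num:
  assumes "distinct xs" shows "ltr xs = num_ltr_max xs"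
proof -
  have "ltr xs = card ({j. isltr xs j} \<inter> set [0..<length xs])"
    unfolding ltr_def ltrpos_def by (rule distinct_length_filter) simp
  also have "{j. isltr xs j} \<inter> set [0..<length xs] = {j. j < length xs \<and> (\<forall>i\<le>j. xs ! i \<le> xs ! j)}"
  proof (intro set_eqI iffI)
    fix j assume "j \<in> {j. isltr xs j} \<inter> set [0..<length xs]"
    then show "j \<in> {j. j < length xs \<and> (\<forall>i\<le>j. xs ! i \<le> xs ! j)}"
      unfolding isltr_def by (auto simp: le_less)
  next
    fix j assume j: "j \<in> {j. j < length xs \<and> (\<forall>i\<le>j. xs ! i \<le> xs ! j)}"
    have "xs ! i < xs ! j" if "i < j" for i
    proof -
      have "xs ! i \<le> xs ! j" using j that by simp
      moreover have "xs ! i \<noteq> xs ! j" using assms j that by (simp add: nth_eq_iff_index_eq)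
      ultimately show ?thesis by simp
    qed
    then show "j \<in> {j. isltr xs j} \<inter> set [0..<length xs]" unfolding isltr_def using j by auto
  qed
  finally show ?thesis unfolding num_ltr_max_def .
qed

lemma rtl_num:
  assumes "distinct xs" shows "rtl xs = num_rtl_min xs"
proof -
  have "rtl xs = card ({j. isrtl xs j} \<inter> set [0..<length xs])"
    unfolding rtl_def by (rule distinct_length_filter) simp
  also have "{j. isrtl xs j} \<inter> set [0..<length xs] =
      {j. j < length xs \<and> (\<forall>i. j \<le> i \<and> i < length xs \<longrightarrow> xs ! j \<le> xs ! i)}"
  proof (intro set_eqI iffI)
    fix j assume "j \<in> {j. isrtl xs j} \<inter> set [0..<length xs]"
    then show "j \<in> {j. j < length xs \<and> (\<forall>i. j \<le> i \<and> i < length xs \<longrightarrow> xs ! j \<le> xs ! i)}"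
      unfolding isrtl_def by (auto simp: le_less)
  next
    fix j assume j: "j \<in> {j. j < length xs \<and> (\<forall>i. j \<le> i \<and> i < length xs \<longrightarrow> xs ! j \<le> xs ! i)}"
    have "xs ! j < xs ! i" if "j < i" "i < length xs" for i
    proof -
      have "xs ! j \<le> xs ! i" using j that by simp
      moreover have "xs ! j \<noteq> xs ! i" using assms j that by (simp add: nth_eq_iff_index_eq)
      ultimately show ?thesis by simp
    qed
    then show "j \<in> {j. isrtl xs j} \<inter> set [0..<length xs]" unfolding isrtl_def using j by auto
  qed
  finally show ?thesis unfolding num_rtl_min_def .
qed

lemma key:
  assumes n: "n \<ge> 2" and p: "1 \<le> p" "p \<le> n - 1"
    and perm: "is_perm n \<pi>" and res: "p_resultant n p \<pi>"
  shows "2 * num_toppling_to n p \<pi> = Q (num_ltr_max (perm_left n p \<pi>)) (num_rtl_min (perm_right n p \<pi>))"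
proof -
  define m where "m = n - 1"
  define h where "h = m + 1 - p"
  have pm: "1 \<le> p" "p \<le> m" using p unfolding m_def by auto
  have nm: "n = m + 1" using n unfolding m_def by simp
  have hh: "h = n - p" unfolding h_def nm by simp
  have dpi: "distinct \<pi>" and spi: "set \<pi> = {1..m+1}" using perm unfolding is_perm_def nm by auto
  have c1: "num_toppling_to n p \<pi> = card {w \<in> Wset m p. out p w = \<pi>}"
    unfolding num_toppling_to_def m_def[symmetric] using count1[OF pm h_def] .
  have c2: "2 * card {w \<in> Wset m p. out p w = \<pi>} = card (Fset (take h \<pi>) (drop h \<pi>))"
    using count2[OF pm] count3[OF pm h_def dpi spi] by simp
  have dd: "distinct (take h \<pi> @ drop h \<pi>)" using dpi by simp
  have c3: "card (Fset (take h \<pi>) (drop h \<pi>)) =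
      (if gt (take h \<pi>) (drop h \<pi>) then Q (ltr (take h \<pi>)) (rtl (drop h \<pi>)) else 0)"
    using card_Fset[OF dd] .
  obtain c where c: "c \<in> confS m p" "topples_to m c \<pi>"
    using res unfolding p_resultant_def m_def by blast
  obtain w where w: "distinct w" "set w = {1..m+1}" "w ! (p - 1) < w ! p" "cfg h p w = c"
    using cfg_surj[OF pm h_def c(1)] by blast
  have "out p w = \<pi>" using topples_iff[OF pm h_def w(1,2)] c(2) w(4) by simp
  then have "w \<in> {w \<in> Wset m p. out p w = \<pi>}" using w unfolding Wset_def by simp
  moreover have "finite {w \<in> Wset m p. out p w = \<pi>}"
    using Full_finite[of m p \<pi>] by (rule finite_subset[rotated]) (auto simp: Wset_def Full_def)
  ultimately have "card {w \<in> Wset m p. out p w = \<pi>} > 0" by (auto simp: card_gt_0_iff)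
  then have "gt (take h \<pi>) (drop h \<pi>)" using c2 c3 by (auto split: if_splits)
  then have "2 * num_toppling_to n p \<pi> = Q (ltr (take h \<pi>)) (rtl (drop h \<pi>))"
    using c1 c2 c3 by simp
  also have "ltr (take h \<pi>) = num_ltr_max (perm_left n p \<pi>)"
    unfolding perm_left_def hh[symmetric] using ltr_num dpi by simp
  also have "rtl (drop h \<pi>) = num_rtl_min (perm_right n p \<pi>)"
    unfolding perm_right_def hh[symmetric] using rtl_num dpi by simp
  finally show ?thesis .
qed

theorem lemma2p11:
  fixes n p :: nat and \<pi> \<pi>' :: "nat list"
  assumes "n \<ge> 2" and "1 \<le> p" and "p \<le> n - 1"
    and "is_perm n \<pi>" and "is_perm n \<pi>'"
    and "p_resultant n p \<pi>" and "p_resultant n p \<pi>'"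
    and "num_ltr_max (perm_left n p \<pi>) = num_ltr_max (perm_left n p \<pi>')"
    and "num_rtl_min (perm_right n p \<pi>) = num_rtl_min (perm_right n p \<pi>')"
  shows "num_toppling_to n p \<pi> = num_toppling_to n p \<pi>'"
proof -
  have "2 * num_toppling_to n p \<pi> = 2 * num_toppling_to n p \<pi>'"
    using key[OF assms(1,2,3,4,6)] key[OF assms(1,2,3,5,7)] assms(8,9) by simp
  then show ?thesis by simp
qed


end
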